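(* Let $((f_t),(g_t),(h_t))$ be a $W_{1,+}$-geodesic on $G$ with associated function $m$. Define kernels $K(x_1,x_0)=m(x_0,x_1)/m(x_1)$ for $x_0\in\mathcal{E}(x_1)$ and $K^*(x_0,x_1)=m(x_0,x_1)/m(x_0)$ for $x_1\in\mathcal{F}(x_0)$ (both zero otherwise), acting on functions by $Kf(x_1)=\sum_{x_0}K(x_1,x_0)f(x_0)$ and $K^*f(x_0)=\sum_{x_1}K^*(x_0,x_1)f(x_1)$. Then: (1) if $x_1\notin\mathcal{A}$, $\sum_{x_0\in\mathcal{E}(x_1)}K(x_1,x_0)=1$; (2) if $x_0\notin\mathcal{B}$, $\sum_{x_1\in\mathcal{F}(x_0)}K^*(x_0,x_1)=1$; (3) $K$ and $K^*$ are adjoint for the scalar product $\langle f,g\rangle=\sum_{x\in G}f(x)g(x)m(x)$; (4) for $n\ge1$, $K^n(x_n,x_0)>0$ only if $x_0\le x_n$ and $d(x_0,x_n)=n$, and for such a pair $K^n(x_n,x_0)=m(x_0,x_n)/m(x_n)$; (5) for $x_0\le x_n$ with $d(x_0,x_n)=n$, $(K^* )^n(x_0,x_n)=m(x_0,x_n)/m(x_0)$; (6) $K$ and $K^*$ are nilpotent.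
   Context: $G$ is a connected, locally finite graph with graph distance $d$; geodesics are paths of adjacent vertices $\gamma(0),\dots,\gamma(n)$ with $n=d(\gamma(0),\gamma(n))$, $e_0(\gamma)=\gamma(0)$, $e_1(\gamma)=\gamma(n)$. For finitely supported probability distributions $f_0,f_1$: $\Pi_1(f_0,f_1)$ = couplings minimizing $\sum d(x,y)\pi(x,y)$ (minimum $W_1$), $\mathcal{C}(f_0,f_1)=\{(x,y):\pi(x,y)>0$ for some $\pi\in\Pi_1\}$; $W_1$-orientation: adjacent $x,y$ get $x\to y$ iff some geodesic $\gamma$ with $(e_0(\gamma),e_1(\gamma))\in\mathcal{C}(f_0,f_1)$ has $\gamma(k)=x,\gamma(k+1)=y$. Oriented paths: $\gamma(i)\to\gamma(i+1)$; $x\le y$ iff an oriented path (possibly of length $0$) goes from $x$ to $y$; $\gamma_i=\gamma(i)$. $E(G)=\{(xy):x\to y\}$, $T(G)$ the triples $x_0\to x_1\to x_2$, $\mathcal{F}(x)=\{y:x\to y\}$, $\mathcal{E}(x)=\{y:y\to x\}$; $\nabla g(x_1)=\sum_{\mathcal{F}(x_1)}g(x_1x_2)-\sum_{\mathcal{E}(x_1)}g(x_0x_1)$, $\nabla h(x_1x_2)=\sum_{x_3\in\mathcal{F}(x_2)}h(x_1x_2x_3)-\sum_{x_0\in\mathcal{E}(x_1)}h(x_0x_1x_2)$. $W_{1,+}$-geodesic: a family $(f_t)_{t\in[0,1]}$ from $f_0$ to $f_1$ with $W_1(f_s,f_t)=|t-s|W_1(f_0,f_1)$, differentiable in $t$,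 with $g_t$ on $E(G)$, $h_t$ on $T(G)$, $\partial_tf_t=-\nabla g_t$, $\partial_tg_t=-\nabla h_t$, $g_t>0$, $f_t(x_1)h_t(x_0x_1x_2)=g_t(x_0x_1)g_t(x_1x_2)$. $C_\gamma(t)=f_t(\gamma_0)$ if $L(\gamma)=0$, $g_t(\gamma_0\gamma_1)$ if $L(\gamma)=1$, $\prod_{i=0}^{n-1}g_t(\gamma_i\gamma_{i+1})/\prod_{j=1}^{n-1}f_t(\gamma_j)$ if $n\ge2$. $\mathcal{A}=\{x:\mathcal{E}(x)=\emptyset\}$, $\mathcal{B}=\{x:\mathcal{F}(x)=\emptyset\}$; extremal oriented paths start in $\mathcal{A}$ and end in $\mathcal{B}$. For $z_1\le\cdots\le z_p$, $m(z_1,\dots,z_p)=\sum_\gamma C_\gamma(0)$ over extremal oriented paths $\gamma$ with indices $k_1\le\dots\le k_p$, $\gamma(k_i)=z_i$ (for extremal $\gamma$, $C_\gamma(t)$ is independent of $t$). *)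

theory Defs
  imports "HOL-Analysis.Analysis"
begin

definition walk :: "('a \<Rightarrow> 'a \<Rightarrow> bool) \<Rightarrow> 'a list \<Rightarrow> bool" where
  "walk adj \<gamma> \<longleftrightarrow> \<gamma> \<noteq> [] \<and> (\<forall>i. Suc i < length \<gamma> \<longrightarrow> adj (\<gamma> ! i) (\<gamma> ! Suc i))"

definition graph_connected :: "('a \<Rightarrow> 'a \<Rightarrow> bool) \<Rightarrow> bool" where
  "graph_connected adj \<longleftrightarrow> (\<forall>x y. \<exists>\<gamma>. walk adj \<gamma> \<and> hd \<gamma> = x \<and> last \<gamma> = y)"

definition locally_finite :: "('a \<Rightarrow> 'a \<Rightarrow> bool) \<Rightarrow> bool" where
  "locally_finite adj \<longleftrightarrow> (\<forall>x. finite {y. adj x y})"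

definition gdist :: "('a \<Rightarrow> 'a \<Rightarrow> bool) \<Rightarrow> 'a \<Rightarrow> 'a \<Rightarrow> nat" where
  "gdist adj x y = (LEAST n. \<exists>\<gamma>. walk adj \<gamma> \<and> hd \<gamma> = x \<and> last \<gamma> = y \<and> length \<gamma> = Suc n)"

definition geodesic :: "('a \<Rightarrow> 'a \<Rightarrow> bool) \<Rightarrow> 'a list \<Rightarrow> bool" where
  "geodesic adj \<gamma> \<longleftrightarrow> walk adj \<gamma> \<and> length \<gamma> = Suc (gdist adj (hd \<gamma>) (last \<gamma>))"

definition fin_prob :: "('a \<Rightarrow> real) \<Rightarrow> bool" where
  "fin_prob p \<longleftrightarrow> (\<forall>x. p x \<ge> 0) \<and> finite {x. p x \<noteq> 0} \<and> (\<Sum>x\<in>{x. p x \<noteq> 0}. p x) = 1"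

definition coupling :: "('a \<Rightarrow> real) \<Rightarrow> ('a \<Rightarrow> real) \<Rightarrow> ('a \<Rightarrow> 'a \<Rightarrow> real) \<Rightarrow> bool" where
  "coupling f0 f1 \<pi> \<longleftrightarrow> (\<forall>x y. \<pi> x y \<ge> 0) \<and> finite {(x, y). \<pi> x y \<noteq> 0}
     \<and> (\<forall>x. (\<Sum>y\<in>{y. \<pi> x y \<noteq> 0}. \<pi> x y) = f0 x)
     \<and> (\<forall>y. (\<Sum>x\<in>{x. \<pi> x y \<noteq> 0}. \<pi> x y) = f1 y)"

definition tcost :: "('a \<Rightarrow> 'a \<Rightarrow> bool) \<Rightarrow> ('a \<Rightarrow> 'a \<Rightarrow> real) \<Rightarrow> real" where
  "tcost adj \<pi> = (\<Sum>p\<in>{(x, y). \<pi> x y \<noteq> 0}. real (gdist adj (fst p) (snd p)) * \<pi> (fst p) (snd p))"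

definition W1 :: "('a \<Rightarrow> 'a \<Rightarrow> bool) \<Rightarrow> ('a \<Rightarrow> real) \<Rightarrow> ('a \<Rightarrow> real) \<Rightarrow> real" where
  "W1 adj f0 f1 = Inf {tcost adj \<pi> | \<pi>. coupling f0 f1 \<pi>}"

definition opt_couplings :: "('a \<Rightarrow> 'a \<Rightarrow> bool) \<Rightarrow> ('a \<Rightarrow> real) \<Rightarrow> ('a \<Rightarrow> real) \<Rightarrow> ('a \<Rightarrow> 'a \<Rightarrow> real) set" where
  "opt_couplings adj f0 f1 = {\<pi>. coupling f0 f1 \<pi> \<and> tcost adj \<pi> = W1 adj f0 f1}"

definition Cset :: "('a \<Rightarrow> 'a \<Rightarrow> bool) \<Rightarrow> ('a \<Rightarrow> real) \<Rightarrow> ('a \<Rightarrow> real) \<Rightarrow> ('a \<times> 'a) set" where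
  "Cset adj f0 f1 = {(x, y). \<exists>\<pi>\<in>opt_couplings adj f0 f1. \<pi> x y > 0}"

definition orient :: "('a \<Rightarrow> 'a \<Rightarrow> bool) \<Rightarrow> ('a \<Rightarrow> real) \<Rightarrow> ('a \<Rightarrow> real) \<Rightarrow> 'a \<Rightarrow> 'a \<Rightarrow> bool" where
  "orient adj f0 f1 x y \<longleftrightarrow> adj x y \<and>
     (\<exists>\<gamma> k. geodesic adj \<gamma> \<and> (hd \<gamma>, last \<gamma>) \<in> Cset adj f0 f1 \<and> Suc k < length \<gamma>
            \<and> \<gamma> ! k = x \<and> \<gamma> ! Suc k = y)"

definition Fset :: "('a \<Rightarrow> 'a \<Rightarrow> bool) \<Rightarrow> 'a \<Rightarrow> 'a set" where
  "Fset r x = {y. r x y}"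

definition Eset :: "('a \<Rightarrow> 'a \<Rightarrow> bool) \<Rightarrow> 'a \<Rightarrow> 'a set" where
  "Eset r x = {y. r y x}"

definition opath :: "('a \<Rightarrow> 'a \<Rightarrow> bool) \<Rightarrow> 'a list \<Rightarrow> bool" where
  "opath r \<gamma> \<longleftrightarrow> \<gamma> \<noteq> [] \<and> (\<forall>i. Suc i < length \<gamma> \<longrightarrow> r (\<gamma> ! i) (\<gamma> ! Suc i))"

definition oleq :: "('a \<Rightarrow> 'a \<Rightarrow> bool) \<Rightarrow> 'a \<Rightarrow> 'a \<Rightarrow> bool" where
  "oleq r x y \<longleftrightarrow> (\<exists>\<gamma>. opath r \<gamma> \<and> hd \<gamma> = x \<and> last \<gamma> = y)"

definition Asrc :: "('a \<Rightarrow> 'a \<Rightarrow> bool) \<Rightarrow> 'a set" where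
  "Asrc r = {x. Eset r x = {}}"

definition Bsink :: "('a \<Rightarrow> 'a \<Rightarrow> bool) \<Rightarrow> 'a set" where
  "Bsink r = {x. Fset r x = {}}"

definition divg :: "('a \<Rightarrow> 'a \<Rightarrow> bool) \<Rightarrow> ('a \<Rightarrow> 'a \<Rightarrow> real) \<Rightarrow> 'a \<Rightarrow> real" where
  "divg r g x1 = (\<Sum>x2\<in>Fset r x1. g x1 x2) - (\<Sum>x0\<in>Eset r x1. g x0 x1)"

definition divh :: "('a \<Rightarrow> 'a \<Rightarrow> bool) \<Rightarrow> ('a \<Rightarrow> 'a \<Rightarrow> 'a \<Rightarrow> real) \<Rightarrow> 'a \<Rightarrow> 'a \<Rightarrow> real" where
  "divh r h x1 x2 = (\<Sum>x3\<in>Fset r x2. h x1 x2 x3) - (\<Sum>x0\<in>Eset r x1. h x0 x1 x2)"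

definition W1plus_geodesic ::
  "('a \<Rightarrow> 'a \<Rightarrow> bool) \<Rightarrow> (real \<Rightarrow> 'a \<Rightarrow> real) \<Rightarrow> (real \<Rightarrow> 'a \<Rightarrow> 'a \<Rightarrow> real)
     \<Rightarrow> (real \<Rightarrow> 'a \<Rightarrow> 'a \<Rightarrow> 'a \<Rightarrow> real) \<Rightarrow> bool" where
  "W1plus_geodesic adj f g h \<longleftrightarrow>
    (let r = orient adj (f 0) (f 1) in
      (\<forall>t\<in>{0..1}. fin_prob (f t))
    \<and> (\<forall>s\<in>{0..1}. \<forall>t\<in>{0..1}. W1 adj (f s) (f t) = \<bar>t - s\<bar> * W1 adj (f 0) (f 1))
    \<and> (\<forall>x. \<forall>t\<in>{0..1}. ((\<lambda>s. f s x) has_real_derivative (- divg r (g t) x)) (at t within {0..1}))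
    \<and> (\<forall>x y. r x y \<longrightarrow> (\<forall>t\<in>{0..1}.
          ((\<lambda>s. g s x y) has_real_derivative (- divh r (h t) x y)) (at t within {0..1})))
    \<and> (\<forall>x y. \<forall>t\<in>{0..1}. r x y \<longrightarrow> g t x y > 0)
    \<and> (\<forall>x0 x1 x2. \<forall>t\<in>{0..1}. r x0 x1 \<longrightarrow> r x1 x2 \<longrightarrow>
          f t x1 * h t x0 x1 x2 = g t x0 x1 * g t x1 x2))"

definition Cpath :: "(real \<Rightarrow> 'a \<Rightarrow> real) \<Rightarrow> (real \<Rightarrow> 'a \<Rightarrow> 'a \<Rightarrow> real) \<Rightarrow> real \<Rightarrow> 'a list \<Rightarrow> real" where
  "Cpath f g t \<gamma> =
    (if length \<gamma> = 1 then f t (\<gamma> ! 0)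
     else if length \<gamma> = 2 then g t (\<gamma> ! 0) (\<gamma> ! 1)
     else (\<Prod>i<length \<gamma> - 1. g t (\<gamma> ! i) (\<gamma> ! Suc i)) / (\<Prod>j\<in>{1..<length \<gamma> - 1}. f t (\<gamma> ! j)))"

definition extremal :: "('a \<Rightarrow> 'a \<Rightarrow> bool) \<Rightarrow> 'a list \<Rightarrow> bool" where
  "extremal r \<gamma> \<longleftrightarrow> opath r \<gamma> \<and> hd \<gamma> \<in> Asrc r \<and> last \<gamma> \<in> Bsink r"

text \<open>\<open>mfun r f g [z1,...,zp]\<close> is \<open>m(z1,...,zp)\<close>.\<close>
definition mfun :: "('a \<Rightarrow> 'a \<Rightarrow> bool) \<Rightarrow> (real \<Rightarrow> 'a \<Rightarrow> real) \<Rightarrow> (real \<Rightarrow> 'a \<Rightarrow> 'a \<Rightarrow> real) \<Rightarrow> 'a list \<Rightarrow> real" where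
  "mfun r f g zs = (\<Sum>\<gamma>\<in>{\<gamma>. extremal r \<gamma> \<and>
       (\<exists>ks. length ks = length zs \<and> sorted ks \<and>
             (\<forall>i<length zs. ks ! i < length \<gamma> \<and> \<gamma> ! (ks ! i) = zs ! i))}. Cpath f g 0 \<gamma>)"

definition Kker :: "('a \<Rightarrow> 'a \<Rightarrow> bool) \<Rightarrow> ('a list \<Rightarrow> real) \<Rightarrow> 'a \<Rightarrow> 'a \<Rightarrow> real" where
  "Kker r m x1 x0 = (if r x0 x1 then m [x0, x1] / m [x1] else 0)"

definition Kstar :: "('a \<Rightarrow> 'a \<Rightarrow> bool) \<Rightarrow> ('a list \<Rightarrow> real) \<Rightarrow> 'a \<Rightarrow> 'a \<Rightarrow> real" where
  "Kstar r m x0 x1 = (if r x0 x1 then m [x0, x1] / m [x0] else 0)"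

definition Kop :: "('a \<Rightarrow> 'a \<Rightarrow> bool) \<Rightarrow> ('a list \<Rightarrow> real) \<Rightarrow> ('a \<Rightarrow> real) \<Rightarrow> 'a \<Rightarrow> real" where
  "Kop r m u x1 = (\<Sum>x0\<in>Eset r x1. Kker r m x1 x0 * u x0)"

definition Kstarop :: "('a \<Rightarrow> 'a \<Rightarrow> bool) \<Rightarrow> ('a list \<Rightarrow> real) \<Rightarrow> ('a \<Rightarrow> real) \<Rightarrow> 'a \<Rightarrow> real" where
  "Kstarop r m u x0 = (\<Sum>x1\<in>Fset r x0. Kstar r m x0 x1 * u x1)"

fun Kpow :: "('a \<Rightarrow> 'a \<Rightarrow> bool) \<Rightarrow> ('a list \<Rightarrow> real) \<Rightarrow> nat \<Rightarrow> 'a \<Rightarrow> 'a \<Rightarrow> real" where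
  "Kpow r m 0 x y = (if x = y then 1 else 0)"
| "Kpow r m (Suc n) x y = (\<Sum>z\<in>Eset r x. Kker r m x z * Kpow r m n z y)"

fun Kstarpow :: "('a \<Rightarrow> 'a \<Rightarrow> bool) \<Rightarrow> ('a list \<Rightarrow> real) \<Rightarrow> nat \<Rightarrow> 'a \<Rightarrow> 'a \<Rightarrow> real" where
  "Kstarpow r m 0 x y = (if x = y then 1 else 0)"
| "Kstarpow r m (Suc n) x y = (\<Sum>z\<in>Fset r x. Kstar r m x z * Kstarpow r m n z y)"

definition mscal :: "('a list \<Rightarrow> real) \<Rightarrow> ('a \<Rightarrow> real) \<Rightarrow> ('a \<Rightarrow> real) \<Rightarrow> real" where
  "mscal m u v = (\<Sum>\<^sub>\<infinity>x. u x * v x * m [x])"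

end

theory Submission
  imports Defs
begin


lemma walk_single[simp]: "walk adj [x]"
  by (simp add: walk_def)

lemma walk_Cons_Cons[simp]: "walk adj (x # y # ys) \<longleftrightarrow> adj x y \<and> walk adj (y # ys)"
  unfolding walk_def
  apply (auto simp: nth_Cons split: nat.splits)
  done

lemma walk_append:
  assumes "walk adj a" "walk adj b" "last a = hd b"
  shows "walk adj (a @ tl b)"
  using assms
proof (induction a rule: induct_list012)
  case 1 then show ?case by (simp add: walk_def)
next
  case (2 x) then show ?case by (cases b) auto
next
  case (3 x y zs) then show ?case by auto
qed

lemma opath_eq_walk: "opath r = walk r"
  by (rule ext) (simp add: opath_def walk_def)

lemma gdist_walk:
  assumes "graph_connected adj"
  shows "\<exists>\<gamma>. walk adj \<gamma> \<and> hd \<gamma> = x \<and> last \<gamma> = y \<and> length \<gamma> = Suc (gdist adj x y)"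
proof -
  obtain \<gamma> where "walk adj \<gamma>" "hd \<gamma> = x" "last \<gamma> = y"
    using assms unfolding graph_connected_def by blast
  then have "\<exists>n \<gamma>. walk adj \<gamma> \<and> hd \<gamma> = x \<and> last \<gamma> = y \<and> length \<gamma> = Suc n"
    by (metis walk_def length_greater_0_conv Suc_pred)
  then show ?thesis unfolding gdist_def by (rule LeastI_ex)
qed

lemma gdist_le:
  assumes "walk adj \<gamma>" "hd \<gamma> = x" "last \<gamma> = y"
  shows "gdist adj x y \<le> length \<gamma> - 1"
proof -
  have "length \<gamma> = Suc (length \<gamma> - 1)" using assms by (simp add: walk_def)
  then show ?thesis unfolding gdist_def using assms by (metis (mono_tags, lifting) Least_le)
qed

lemma gdist_refl: "gdist adj x x = 0"
  using gdist_le[of adj "[x]" x x] by simp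

lemma gdist_adj: "adj x y \<Longrightarrow> gdist adj x y \<le> 1"
  using gdist_le[of adj "[x,y]" x y] by simp

lemma gdist_triangle:
  assumes "graph_connected adj"
  shows "gdist adj x z \<le> gdist adj x y + gdist adj y z"
proof -
  obtain a where a: "walk adj a" "hd a = x" "last a = y" "length a = Suc (gdist adj x y)"
    using gdist_walk[OF assms] by blast
  obtain b where b: "walk adj b" "hd b = y" "last b = z" "length b = Suc (gdist adj y z)"
    using gdist_walk[OF assms] by blast
  have w: "walk adj (a @ tl b)" using walk_append[of adj a b] a b by simp
  have "a \<noteq> []" "b \<noteq> []" using a b by auto
  have h: "hd (a @ tl b) = x" using a \<open>a \<noteq> []\<close> by simp
  have l: "last (a @ tl b) = z"
    using a b \<open>b \<noteq> []\<close> by (cases b) auto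
  have "gdist adj x z \<le> length (a @ tl b) - 1" using gdist_le[OF w h l] .
  also have "\<dots> = gdist adj x y + gdist adj y z" using a b by simp
  finally show ?thesis .
qed



lemma slice_sum:
  assumes "finite Y" "{y. \<pi> x y \<noteq> 0} \<subseteq> Y"
  shows "(\<Sum>y\<in>{y. \<pi> x y \<noteq> 0}. \<pi> x y) = (\<Sum>y\<in>Y. \<pi> x y)"
  by (rule sum.mono_neutral_left) (use assms in auto)

lemma slice_sum2:
  assumes "finite X" "{x. \<pi> x y \<noteq> 0} \<subseteq> X"
  shows "(\<Sum>x\<in>{x. \<pi> x y \<noteq> 0}. \<pi> x y) = (\<Sum>x\<in>X. \<pi> x y)"
  by (rule sum.mono_neutral_left) (use assms in auto)

lemma tcost_sum:
  assumes "finite T" "{(x, y). \<pi> x y \<noteq> 0} \<subseteq> T"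
  shows "tcost adj \<pi> = (\<Sum>p\<in>T. real (gdist adj (fst p) (snd p)) * \<pi> (fst p) (snd p))"
  unfolding tcost_def
  by (rule sum.mono_neutral_left) (use assms in auto)

lemma coupling_iff:
  assumes "finite T" "{(x, y). \<pi> x y \<noteq> 0} \<subseteq> T" "\<forall>x y. \<pi> x y \<ge> 0"
  shows "coupling f0 f1 \<pi> \<longleftrightarrow> (\<forall>x. (\<Sum>y\<in>snd ` T. \<pi> x y) = f0 x) \<and> (\<forall>y. (\<Sum>x\<in>fst ` T. \<pi> x y) = f1 y)"
proof -
  have "finite {(x, y). \<pi> x y \<noteq> 0}" using assms finite_subset by blast
  moreover have "\<And>x. (\<Sum>y\<in>{y. \<pi> x y \<noteq> 0}. \<pi> x y) = (\<Sum>y\<in>snd ` T. \<pi> x y)"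
    by (rule slice_sum) (use assms in force)+
  moreover have "\<And>y. (\<Sum>x\<in>{x. \<pi> x y \<noteq> 0}. \<pi> x y) = (\<Sum>x\<in>fst ` T. \<pi> x y)"
    by (rule slice_sum2) (use assms in force)+
  ultimately show ?thesis unfolding coupling_def using assms(3) by auto
qed

lemma coupling_supp_finite: "coupling f0 f1 \<pi> \<Longrightarrow> finite {(x, y). \<pi> x y \<noteq> 0}"
  by (simp add: coupling_def)

lemma tcost_nonneg: "coupling f0 f1 \<pi> \<Longrightarrow> tcost adj \<pi> \<ge> 0"
  unfolding tcost_def coupling_def by (auto intro!: sum_nonneg)

lemma W1_le: "coupling f0 f1 \<pi> \<Longrightarrow> W1 adj f0 f1 \<le> tcost adj \<pi>"
  unfolding W1_def
  by (rule cInf_lower) (auto intro: tcost_nonneg simp: bdd_below_def)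

lemma Cset_supp:
  assumes "(x, y) \<in> Cset adj f0 f1"
  shows "f0 x > 0 \<and> f1 y > 0"
proof -
  obtain \<pi> where \<pi>: "coupling f0 f1 \<pi>" "\<pi> x y > 0"
    using assms unfolding Cset_def opt_couplings_def by auto
  have fin: "finite {(x, y). \<pi> x y \<noteq> 0}" using \<pi> by (simp add: coupling_def)
  have f1: "finite {y. \<pi> x y \<noteq> 0}"
    by (rule finite_subset[OF _ finite_imageI[OF fin, of snd]]) force
  have f2: "finite {x. \<pi> x y \<noteq> 0}"
    by (rule finite_subset[OF _ finite_imageI[OF fin, of fst]]) force
  have "0 < (\<Sum>y\<in>{y. \<pi> x y \<noteq> 0}. \<pi> x y)"
    by (rule sum_pos2[OF f1, of y]) (use \<pi> in \<open>auto simp: coupling_def\<close>)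
  moreover have "0 < (\<Sum>x\<in>{x. \<pi> x y \<noteq> 0}. \<pi> x y)"
    by (rule sum_pos2[OF f2, of x]) (use \<pi> in \<open>auto simp: coupling_def\<close>)
  ultimately show ?thesis using \<pi> unfolding coupling_def by auto
qed

lemma Cset_finite:
  assumes "fin_prob f0" "fin_prob f1"
  shows "finite (Cset adj f0 f1)"
proof -
  have "Cset adj f0 f1 \<subseteq> {x. f0 x \<noteq> 0} \<times> {y. f1 y \<noteq> 0}"
    using Cset_supp by fastforce
  then show ?thesis using assms unfolding fin_prob_def by (meson finite_SigmaI finite_subset)
qed

lemma opt_avg:
  assumes "\<pi>1 \<in> opt_couplings adj f0 f1" "\<pi>2 \<in> opt_couplings adj f0 f1"
  shows "(\<lambda>x y. (\<pi>1 x y + \<pi>2 x y) / 2) \<in> opt_couplings adj f0 f1"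
proof -
  let ?p = "\<lambda>x y. (\<pi>1 x y + \<pi>2 x y) / 2"
  have c1: "coupling f0 f1 \<pi>1" and c2: "coupling f0 f1 \<pi>2"
    and t1: "tcost adj \<pi>1 = W1 adj f0 f1" and t2: "tcost adj \<pi>2 = W1 adj f0 f1"
    using assms by (auto simp: opt_couplings_def)
  define T where "T = {(x, y). \<pi>1 x y \<noteq> 0} \<union> {(x, y). \<pi>2 x y \<noteq> 0}"
  have fT: "finite T" using c1 c2 by (simp add: T_def coupling_def)
  have n1: "\<forall>x y. \<pi>1 x y \<ge> 0" and n2: "\<forall>x y. \<pi>2 x y \<ge> 0" using c1 c2 by (auto simp: coupling_def)
  have s1: "{(x, y). \<pi>1 x y \<noteq> 0} \<subseteq> T" and s2: "{(x, y). \<pi>2 x y \<noteq> 0} \<subseteq> T" by (auto simp: T_def)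
  have s: "{(x, y). ?p x y \<noteq> 0} \<subseteq> T" using n1 n2 by (auto simp: T_def)
  have n: "\<forall>x y. ?p x y \<ge> 0" using n1 n2 by auto
  have "coupling f0 f1 ?p"
    using coupling_iff[OF fT s1 n1, of f0 f1] coupling_iff[OF fT s2 n2, of f0 f1] c1 c2
    unfolding coupling_iff[OF fT s n]
    by (simp add: sum_divide_distrib[symmetric] sum.distrib)
  moreover have "tcost adj ?p = W1 adj f0 f1"
    using tcost_sum[OF fT s, of adj] tcost_sum[OF fT s1, of adj] tcost_sum[OF fT s2, of adj] t1 t2
    by (simp add: sum_divide_distrib[symmetric] sum.distrib distrib_left)
  ultimately show ?thesis by (simp add: opt_couplings_def)
qed

lemma opt_pos:
  assumes "ps \<noteq> []" "set ps \<subseteq> Cset adj f0 f1"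
  shows "\<exists>\<pi>\<in>opt_couplings adj f0 f1. \<forall>p\<in>set ps. \<pi> (fst p) (snd p) > 0"
  using assms
proof (induction ps)
  case Nil then show ?case by simp
next
  case (Cons p ps)
  obtain \<pi>1 where p1: "\<pi>1 \<in> opt_couplings adj f0 f1" "\<pi>1 (fst p) (snd p) > 0"
    using Cons.prems unfolding Cset_def by (cases p) auto
  show ?case
  proof (cases "ps = []")
    case True then show ?thesis using p1 by auto
  next
    case False
    then obtain \<pi>2 where p2: "\<pi>2 \<in> opt_couplings adj f0 f1" "\<forall>q\<in>set ps. \<pi>2 (fst q) (snd q) > 0"
      using Cons by auto
    have n1: "\<forall>x y. \<pi>1 x y \<ge> 0" and n2: "\<forall>x y. \<pi>2 x y \<ge> 0"
      using p1 p2 by (auto simp: coupling_def opt_couplings_def)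
    show ?thesis
      apply (rule bexI[OF _ opt_avg[OF p1(1) p2(1)]])
      using p1 p2 n1 n2 by (auto intro: add_pos_nonneg add_nonneg_pos)
  qed
qed



lemma cnt_marg1:
  assumes "finite Y" "snd ` set L \<subseteq> Y"
  shows "(\<Sum>y\<in>Y. real (count_list L (x, y))) = real (count_list (map fst L) x)"
  using assms(2)
proof (induction L)
  case Nil then show ?case by simp
next
  case (Cons p L)
  obtain a b where p: "p = (a, b)" by force
  have "(\<Sum>y\<in>Y. real (count_list (p # L) (x, y)))
      = (\<Sum>y\<in>Y. real (count_list L (x, y))) + (\<Sum>y\<in>Y. (if y = b \<and> x = a then 1 else 0))"
    by (auto simp: p sum.distrib[symmetric] intro!: sum.cong)
  also have "(\<Sum>y\<in>Y. (if y = b \<and> x = a then 1 else 0::real)) = (if x = a then 1 else 0)"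
    using Cons.prems assms(1) p by (auto simp: sum.delta')
  finally show ?case using Cons p by auto
qed

lemma cnt_marg2:
  assumes "finite X" "fst ` set L \<subseteq> X"
  shows "(\<Sum>x\<in>X. real (count_list L (x, y))) = real (count_list (map snd L) y)"
  using assms(2)
proof (induction L)
  case Nil then show ?case by simp
next
  case (Cons p L)
  obtain a b where p: "p = (a, b)" by force
  have "(\<Sum>x\<in>X. real (count_list (p # L) (x, y)))
      = (\<Sum>x\<in>X. real (count_list L (x, y))) + (\<Sum>x\<in>X. (if x = a \<and> y = b then 1 else 0))"
    by (auto simp: p sum.distrib[symmetric] intro!: sum.cong)
  also have "(\<Sum>x\<in>X. (if x = a \<and> y = b then 1 else 0::real)) = (if y = b then 1 else 0)"
    using Cons.prems assms(1) p by (auto simp: sum.delta')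
  finally show ?case using Cons p by auto
qed

lemma cnt_cost:
  assumes "finite T" "set L \<subseteq> T"
  shows "(\<Sum>p\<in>T. h p * real (count_list L p)) = sum_list (map h L)"
  using assms(2)
proof (induction L)
  case Nil then show ?case by simp
next
  case (Cons q L)
  have "(\<Sum>p\<in>T. h p * real (count_list (q # L) p))
      = (\<Sum>p\<in>T. h p * real (count_list L p)) + (\<Sum>p\<in>T. (if p = q then h p else 0))"
    by (auto simp: sum.distrib[symmetric] algebra_simps intro!: sum.cong)
  also have "(\<Sum>p\<in>T. (if p = q then h p else 0)) = h q"
    using Cons.prems assms(1) by (auto simp: sum.delta')
  finally show ?case using Cons by auto
qed

lemma count_list_distinct_le: "distinct L \<Longrightarrow> count_list L p \<le> 1"
  by (induction L) (auto simp: count_list_0_iff)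

definition dd :: "('a \<Rightarrow> 'a \<Rightarrow> bool) \<Rightarrow> 'a \<times> 'a \<Rightarrow> real" where
  "dd adj p = real (gdist adj (fst p) (snd p))"

lemma cyc_mono:
  assumes "distinct ((a, b) # vs)" "set ((a, b) # vs) \<subseteq> Cset adj f0 f1"
  shows "sum_list (map (dd adj) ((a, b) # vs))
     \<le> sum_list (map (dd adj) (zip (a # map fst vs) (map snd vs @ [b])))"
proof -
  define P where "P = (a, b) # vs"
  define Q where "Q = zip (a # map fst vs) (map snd vs @ [b])"
  have fstQ: "map fst Q = map fst P" by (simp add: Q_def P_def)
  have sndQ: "map snd Q = map snd vs @ [b]" by (simp add: Q_def)
  have cntsnd: "\<And>y. count_list (map snd Q) y = count_list (map snd P) y"
    by (simp add: sndQ P_def)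
  obtain \<pi> where \<pi>: "\<pi> \<in> opt_couplings adj f0 f1" "\<forall>p\<in>set P. \<pi> (fst p) (snd p) > 0"
    using opt_pos[of P adj f0 f1] assms by (auto simp: P_def)
  have c: "coupling f0 f1 \<pi>" and tc: "tcost adj \<pi> = W1 adj f0 f1"
    using \<pi> by (auto simp: opt_couplings_def)
  have nn: "\<forall>x y. \<pi> x y \<ge> 0" using c by (simp add: coupling_def)
  define \<epsilon> where "\<epsilon> = Min ((\<lambda>p. \<pi> (fst p) (snd p)) ` set P)"
  have \<epsilon>pos: "\<epsilon> > 0" unfolding \<epsilon>_def using \<pi>(2) by (auto simp: P_def)
  have \<epsilon>le: "\<And>p. p \<in> set P \<Longrightarrow> \<epsilon> \<le> \<pi> (fst p) (snd p)"
    unfolding \<epsilon>_def by auto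
  define \<pi>' where "\<pi>' = (\<lambda>x y. \<pi> x y + \<epsilon> * (real (count_list Q (x, y)) - real (count_list P (x, y))))"
  define T where "T = {(x, y). \<pi> x y \<noteq> 0} \<union> set P \<union> set Q"
  have fT: "finite T" using c by (simp add: T_def coupling_def)
  have sT: "{(x, y). \<pi> x y \<noteq> 0} \<subseteq> T" by (auto simp: T_def)
  have sT': "{(x, y). \<pi>' x y \<noteq> 0} \<subseteq> T"
  proof
    fix p assume "p \<in> {(x, y). \<pi>' x y \<noteq> 0}"
    then obtain x y where p: "p = (x, y)" "\<pi>' x y \<noteq> 0" by auto
    show "p \<in> T"
    proof (rule ccontr)
      assume "p \<notin> T"
      then have "\<pi> x y = 0" "count_list Q (x, y) = 0" "count_list P (x, y) = 0"
        using p by (auto simp: T_def count_list_0_iff)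
      then show False using p by (simp add: \<pi>'_def)
    qed
  qed
  have nn': "\<forall>x y. \<pi>' x y \<ge> 0"
  proof (intro allI)
    fix x y
    show "\<pi>' x y \<ge> 0"
    proof (cases "(x, y) \<in> set P")
      case True
      have "distinct P" using assms(1) by (simp add: P_def)
      then have "count_list P (x, y) \<le> 1" by (rule count_list_distinct_le)
      moreover have "\<epsilon> \<le> \<pi> x y" using \<epsilon>le[OF True] by simp
      have "real (count_list P (x, y)) \<le> 1" using \<open>count_list P (x, y) \<le> 1\<close> by simp
      then have "\<epsilon> * real (count_list P (x, y)) \<le> \<epsilon>" using \<epsilon>pos
        by (simp add: mult_left_le)
      moreover have "0 \<le> \<epsilon> * real (count_list Q (x, y))" using \<epsilon>pos by simp
      ultimately show ?thesis unfolding \<pi>'_def using \<open>\<epsilon> \<le> \<pi> x y\<close>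
        by (simp add: right_diff_distrib)
    next
      case False
      then have "count_list P (x, y) = 0" by (simp add: count_list_0_iff)
      then show ?thesis unfolding \<pi>'_def using \<epsilon>pos nn by simp
    qed
  qed
  have sndT: "snd ` set P \<subseteq> snd ` T" "snd ` set Q \<subseteq> snd ` T" by (auto simp: T_def)
  have fstT: "fst ` set P \<subseteq> fst ` T" "fst ` set Q \<subseteq> fst ` T" by (auto simp: T_def)
  have fsT: "finite (snd ` T)" "finite (fst ` T)" using fT by auto
  have m1: "\<forall>x. (\<Sum>y\<in>snd ` T. \<pi> x y) = f0 x" and m2: "\<forall>y. (\<Sum>x\<in>fst ` T. \<pi> x y) = f1 y"
    using coupling_iff[OF fT sT nn, of f0 f1] c by auto
  have "coupling f0 f1 \<pi>'"
    unfolding coupling_iff[OF fT sT' nn']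
  proof (intro conjI allI)
    fix x
    have "(\<Sum>y\<in>snd ` T. \<pi>' x y) = (\<Sum>y\<in>snd ` T. \<pi> x y)
       + \<epsilon> * ((\<Sum>y\<in>snd ` T. real (count_list Q (x, y))) - (\<Sum>y\<in>snd ` T. real (count_list P (x, y))))"
      by (simp add: \<pi>'_def sum.distrib sum_subtractf sum_distrib_left right_diff_distrib)
    also have "\<dots> = f0 x"
      using m1 cnt_marg1[OF fsT(1) sndT(1)] cnt_marg1[OF fsT(1) sndT(2)] fstQ by simp
    finally show "(\<Sum>y\<in>snd ` T. \<pi>' x y) = f0 x" .
  next
    fix y
    have "(\<Sum>x\<in>fst ` T. \<pi>' x y) = (\<Sum>x\<in>fst ` T. \<pi> x y)
       + \<epsilon> * ((\<Sum>x\<in>fst ` T. real (count_list Q (x, y))) - (\<Sum>x\<in>fst ` T. real (count_list P (x, y))))"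
      by (simp add: \<pi>'_def sum.distrib sum_subtractf sum_distrib_left right_diff_distrib)
    also have "\<dots> = f1 y"
      using m2 cnt_marg2[OF fsT(2) fstT(1)] cnt_marg2[OF fsT(2) fstT(2)] cntsnd by simp
    finally show "(\<Sum>x\<in>fst ` T. \<pi>' x y) = f1 y" .
  qed
  then have "W1 adj f0 f1 \<le> tcost adj \<pi>'" by (rule W1_le)
  moreover have "tcost adj \<pi>' = tcost adj \<pi> + \<epsilon> * (sum_list (map (dd adj) Q) - sum_list (map (dd adj) P))"
  proof -
    have PT: "set P \<subseteq> T" and QT: "set Q \<subseteq> T" by (auto simp: T_def)
    have "tcost adj \<pi>' = (\<Sum>p\<in>T. dd adj p * \<pi>' (fst p) (snd p))"
      using tcost_sum[OF fT sT'] by (simp add: dd_def)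
    also have "\<dots> = (\<Sum>p\<in>T. dd adj p * \<pi> (fst p) (snd p))
      + \<epsilon> * ((\<Sum>p\<in>T. dd adj p * real (count_list Q p)) - (\<Sum>p\<in>T. dd adj p * real (count_list P p)))"
      unfolding \<pi>'_def
      by (simp add: sum.distrib sum_subtractf sum_distrib_left algebra_simps)
    also have "\<dots> = tcost adj \<pi> + \<epsilon> * (sum_list (map (dd adj) Q) - sum_list (map (dd adj) P))"
      unfolding cnt_cost[OF fT PT] cnt_cost[OF fT QT] tcost_sum[OF fT sT] dd_def by simp
    finally show ?thesis .
  qed
  ultimately have "0 \<le> \<epsilon> * (sum_list (map (dd adj) Q) - sum_list (map (dd adj) P))"
    using tc by simp
  then have "0 \<le> sum_list (map (dd adj) Q) - sum_list (map (dd adj) P)"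
    using \<epsilon>pos by (simp add: zero_le_mult_iff)
  then show ?thesis by (simp add: P_def Q_def)
qed



fun ccost :: "('a \<Rightarrow> 'a \<Rightarrow> bool) \<Rightarrow> 'a \<Rightarrow> ('a \<times> 'a) list \<Rightarrow> 'a \<Rightarrow> int" where
  "ccost adj s [] x = int (gdist adj s x)"
| "ccost adj s ((a, b) # cs) x = int (gdist adj s b) - int (gdist adj a b) + ccost adj a cs x"

lemma ccost_app:
  "ccost adj s (us @ (a, b) # vs) x = ccost adj s us b - int (gdist adj a b) + ccost adj a vs x"
proof (induction us arbitrary: s)
  case Nil then show ?case by simp
next
  case (Cons p us) then show ?case by (cases p) simp
qed

lemma ccost_lip:
  assumes "graph_connected adj"
  shows "ccost adj s cs y \<le> ccost adj s cs x + int (gdist adj x y)"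
proof (induction cs arbitrary: s)
  case Nil then show ?case using gdist_triangle[OF assms, where x=s and y=x and z=y] by simp
next
  case (Cons p cs) then show ?case by (cases p) force
qed

lemma ccost_zip:
  "real_of_int (ccost adj a vs b) = sum_list (map (dd adj) (zip (a # map fst vs) (map snd vs @ [b])))
     - sum_list (map (dd adj) vs)"
proof (induction vs arbitrary: a)
  case Nil then show ?case by (simp add: dd_def)
next
  case (Cons p vs) then show ?case by (cases p) (simp add: dd_def)
qed

lemma ccost_cm:
  assumes "distinct ((a, b) # vs)" "set ((a, b) # vs) \<subseteq> Cset adj f0 f1"
  shows "int (gdist adj a b) \<le> ccost adj a vs b"
proof -
  have "sum_list (map (dd adj) ((a, b) # vs))
     \<le> sum_list (map (dd adj) (zip (a # map fst vs) (map snd vs @ [b])))"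
    by (rule cyc_mono[OF assms])
  then have "real (gdist adj a b) \<le> real_of_int (ccost adj a vs b)"
    unfolding ccost_zip by (simp add: dd_def)
  then show ?thesis by linarith
qed

lemma potential:
  assumes conn: "graph_connected adj" and fin: "finite (Cset adj f0 f1)"
  shows "\<exists>\<psi>::'a \<Rightarrow> int. (\<forall>x y. \<psi> y - \<psi> x \<le> int (gdist adj x y))
     \<and> (\<forall>a b. (a, b) \<in> Cset adj f0 f1 \<longrightarrow> \<psi> b - \<psi> a = int (gdist adj a b))"
proof -
  define C where "C = Cset adj f0 f1"
  define CH where "CH = {cs. set cs \<subseteq> C \<and> distinct cs}"
  have fCH: "finite CH"
  proof (rule finite_subset[OF _ finite_lists_length_le[OF fin[folded C_def], of "card C"]])
    show "CH \<subseteq> {xs. set xs \<subseteq> C \<and> length xs \<le> card C}"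
    proof
      fix cs assume "cs \<in> CH"
      then have "set cs \<subseteq> C" "distinct cs" by (auto simp: CH_def)
      moreover have "length cs \<le> card C"
        using calculation card_mono[OF fin[folded C_def]] distinct_card by metis
      ultimately show "cs \<in> {xs. set xs \<subseteq> C \<and> length xs \<le> card C}" by simp
    qed
  qed
  have neCH: "[] \<in> CH" by (simp add: CH_def)
  define D where "D x = Min ((\<lambda>cs. ccost adj undefined cs x) ` CH)" for x
  have Dle: "D x \<le> ccost adj undefined cs x" if "cs \<in> CH" for cs x
    unfolding D_def using fCH that by (simp add: Min_le)
  have Dex: "\<exists>cs\<in>CH. D x = ccost adj undefined cs x" for x
  proof -
    have "D x \<in> (\<lambda>cs. ccost adj undefined cs x) ` CH"
      unfolding D_def using fCH neCH by (intro Min_in) auto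
    then show ?thesis by auto
  qed
  have lip: "D y - D x \<le> int (gdist adj x y)" for x y
  proof -
    obtain cs where "cs \<in> CH" "D x = ccost adj undefined cs x" using Dex by blast
    then show ?thesis using Dle[of cs y] ccost_lip[OF conn, of undefined cs y x] by simp
  qed
  have key: "D a \<le> D b - int (gdist adj a b)" if ab: "(a, b) \<in> C" for a b
  proof -
    obtain cs where cs: "cs \<in> CH" "D b = ccost adj undefined cs b" using Dex by blast
    show ?thesis
    proof (cases "(a, b) \<in> set cs")
      case False
      have "cs @ [(a, b)] \<in> CH" using cs(1) False ab by (auto simp: CH_def)
      then have "D a \<le> ccost adj undefined (cs @ [(a, b)]) a" by (rule Dle)
      also have "\<dots> = D b - int (gdist adj a b)"
        using ccost_app[of adj undefined cs a b "[]" a] cs by (simp add: gdist_refl)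
      finally show ?thesis .
    next
      case True
      then obtain us vs where uv: "cs = us @ (a, b) # vs" by (meson split_list)
      have dcs: "distinct cs" "set cs \<subseteq> C" using cs(1) by (auto simp: CH_def)
      have "us @ [(a, b)] \<in> CH" using dcs uv by (auto simp: CH_def)
      then have "D a \<le> ccost adj undefined (us @ [(a, b)]) a" by (rule Dle)
      also have "\<dots> = ccost adj undefined us b - int (gdist adj a b)"
        using ccost_app[of adj undefined us a b "[]" a] by (simp add: gdist_refl)
      also have "\<dots> \<le> D b - int (gdist adj a b)"
      proof -
        have "int (gdist adj a b) \<le> ccost adj a vs b"
          by (rule ccost_cm[of a b vs adj f0 f1]) (use dcs uv in \<open>auto simp: C_def\<close>)
        then show ?thesis using cs(2) uv ccost_app[of adj undefined us a b vs b] by simp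
      qed
      finally show ?thesis .
    qed
  qed
  show ?thesis
  proof (rule exI[of _ D], intro conjI allI impI)
    fix x y show "D y - D x \<le> int (gdist adj x y)" by (rule lip)
  next
    fix a b assume "(a, b) \<in> Cset adj f0 f1"
    then have "D a \<le> D b - int (gdist adj a b)" using key by (simp add: C_def)
    moreover have "D b - D a \<le> int (gdist adj a b)" by (rule lip)
    ultimately show "D b - D a = int (gdist adj a b)" by simp
  qed
qed



primrec reach :: "('a \<Rightarrow> 'a \<Rightarrow> bool) \<Rightarrow> 'a \<Rightarrow> nat \<Rightarrow> 'a set" where
  "reach adj a 0 = {a}"
| "reach adj a (Suc k) = reach adj a k \<union> (\<Union>x\<in>reach adj a k. {y. adj x y})"

lemma reach_finite: "locally_finite adj \<Longrightarrow> finite (reach adj a k)"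
  by (induction k) (auto simp: locally_finite_def)

lemma reach_mono: "i \<le> k \<Longrightarrow> reach adj a i \<subseteq> reach adj a k"
  by (induction k) (auto simp: le_Suc_eq)

lemma walk_reach:
  assumes "walk adj \<gamma>" "hd \<gamma> = a" "i < length \<gamma>"
  shows "\<gamma> ! i \<in> reach adj a i"
  using assms(3)
proof (induction i)
  case 0 then show ?case using assms by (cases \<gamma>) auto
next
  case (Suc i)
  then have "adj (\<gamma> ! i) (\<gamma> ! Suc i)" using assms(1) by (simp add: walk_def)
  then show ?case using Suc by auto
qed

lemma W_structure:
  assumes conn: "graph_connected adj" and lf: "locally_finite adj"
    and W: "W1plus_geodesic adj f g h"
    and r: "r = orient adj (f 0) (f 1)"
  shows "finite {(x, y). r x y}"
    and "\<exists>\<psi>::'a \<Rightarrow> int. (\<forall>x y. r x y \<longrightarrow> \<psi> y = \<psi> x + 1) \<and> (\<forall>x y. \<psi> y - \<psi> x \<le> int (gdist adj x y))"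
    and "\<forall>x y. r x y \<longrightarrow> adj x y"
    and "\<forall>x y. r x y \<longrightarrow> g 0 x y > 0"
    and "\<forall>x. f 0 x \<ge> 0"
    and "\<forall>x0 x1 x2. r x0 x1 \<longrightarrow> r x1 x2 \<longrightarrow> f 0 x1 > 0"
proof -
  have WW: "(\<forall>t\<in>{0..1}. fin_prob (f t)) \<and> (\<forall>x y. \<forall>t\<in>{0..1}. r x y \<longrightarrow> g t x y > 0)
    \<and> (\<forall>x0 x1 x2. \<forall>t\<in>{0..1}. r x0 x1 \<longrightarrow> r x1 x2 \<longrightarrow>
          f t x1 * h t x0 x1 x2 = g t x0 x1 * g t x1 x2)"
    using W unfolding W1plus_geodesic_def Let_def r[symmetric] by blast
  note Wl = WW[THEN conjunct1] WW[THEN conjunct2, THEN conjunct1] WW[THEN conjunct2, THEN conjunct2]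
  have fp0: "fin_prob (f 0)" and fp1: "fin_prob (f 1)" using Wl(1) by auto
  have finC: "finite (Cset adj (f 0) (f 1))" by (rule Cset_finite[OF fp0 fp1])
  show gpos: "\<forall>x y. r x y \<longrightarrow> g 0 x y > 0" using Wl(2) by auto
  show fnn: "\<forall>x. f 0 x \<ge> 0" using fp0 by (simp add: fin_prob_def)
  show "\<forall>x0 x1 x2. r x0 x1 \<longrightarrow> r x1 x2 \<longrightarrow> f 0 x1 > 0"
  proof (intro allI impI)
    fix x0 x1 x2 assume "r x0 x1" "r x1 x2"
    then have "f 0 x1 * h 0 x0 x1 x2 = g 0 x0 x1 * g 0 x1 x2" using Wl(3) by auto
    moreover have "g 0 x0 x1 * g 0 x1 x2 > 0" using gpos \<open>r x0 x1\<close> \<open>r x1 x2\<close> by simp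
    ultimately have "f 0 x1 \<noteq> 0" by auto
    then show "f 0 x1 > 0" using fnn by (simp add: order_le_neq_trans)
  qed
  show "\<forall>x y. r x y \<longrightarrow> adj x y" by (simp add: r orient_def)
  show "finite {(x, y). r x y}"
  proof (rule finite_subset)
    show "{(x, y). r x y} \<subseteq> (\<Union>(a, b)\<in>Cset adj (f 0) (f 1). reach adj a (gdist adj a b) \<times> reach adj a (gdist adj a b))"
    proof
      fix p assume "p \<in> {(x, y). r x y}"
      then obtain x y where p: "p = (x, y)" "r x y" by auto
      then obtain \<gamma> k where \<gamma>: "geodesic adj \<gamma>" "(hd \<gamma>, last \<gamma>) \<in> Cset adj (f 0) (f 1)"
        "Suc k < length \<gamma>" "\<gamma> ! k = x" "\<gamma> ! Suc k = y"
        unfolding r orient_def by blast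
      let ?a = "hd \<gamma>" and ?b = "last \<gamma>"
      have w: "walk adj \<gamma>" and len: "length \<gamma> = Suc (gdist adj ?a ?b)"
        using \<gamma>(1) by (auto simp: geodesic_def)
      have "x \<in> reach adj ?a (gdist adj ?a ?b)"
        using walk_reach[OF w refl, of k] reach_mono[of k "gdist adj ?a ?b" adj ?a] \<gamma> len by auto
      moreover have "y \<in> reach adj ?a (gdist adj ?a ?b)"
        using walk_reach[OF w refl, of "Suc k"] reach_mono[of "Suc k" "gdist adj ?a ?b" adj ?a] \<gamma> len by auto
      ultimately show "p \<in> (\<Union>(a, b)\<in>Cset adj (f 0) (f 1). reach adj a (gdist adj a b) \<times> reach adj a (gdist adj a b))"
        using \<gamma>(2) p by blast
    qed
    show "finite (\<Union>(a, b)\<in>Cset adj (f 0) (f 1). reach adj a (gdist adj a b) \<times> reach adj a (gdist adj a b))"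
      using finC reach_finite[OF lf] by auto
  qed
  obtain \<psi> :: "'a \<Rightarrow> int" where lip: "\<forall>x y. \<psi> y - \<psi> x \<le> int (gdist adj x y)"
    and eq: "\<forall>a b. (a, b) \<in> Cset adj (f 0) (f 1) \<longrightarrow> \<psi> b - \<psi> a = int (gdist adj a b)"
    using potential[OF conn finC] by blast
  have step: "\<psi> y = \<psi> x + 1" if rxy: "r x y" for x y
  proof -
    obtain \<gamma> k where \<gamma>: "geodesic adj \<gamma>" "(hd \<gamma>, last \<gamma>) \<in> Cset adj (f 0) (f 1)"
      "Suc k < length \<gamma>" "\<gamma> ! k = x" "\<gamma> ! Suc k = y"
      using rxy unfolding r orient_def by blast
    define n where "n = length \<gamma> - 1"
    have w: "walk adj \<gamma>" and len: "length \<gamma> = Suc (gdist adj (hd \<gamma>) (last \<gamma>))"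
      using \<gamma>(1) by (auto simp: geodesic_def)
    have ne: "\<gamma> \<noteq> []" using w by (simp add: walk_def)
    have hdl: "hd \<gamma> = \<gamma> ! 0" "last \<gamma> = \<gamma> ! n"
      using ne by (auto simp: n_def hd_conv_nth last_conv_nth)
    define s where "s i = \<psi> (\<gamma> ! Suc i) - \<psi> (\<gamma> ! i)" for i
    have sle: "s i \<le> 1" if "i < n" for i
    proof -
      have "adj (\<gamma> ! i) (\<gamma> ! Suc i)" using w that by (simp add: walk_def n_def)
      then have "int (gdist adj (\<gamma> ! i) (\<gamma> ! Suc i)) \<le> 1" using gdist_adj by fastforce
      moreover have "s i \<le> int (gdist adj (\<gamma> ! i) (\<gamma> ! Suc i))" using lip unfolding s_def by blast
      ultimately show ?thesis by linarith
    qed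
    have "(\<Sum>i<n. s i) = \<psi> (\<gamma> ! n) - \<psi> (\<gamma> ! 0)"
      unfolding s_def by (rule sum_lessThan_telescope)
    also have "\<dots> = int n"
    proof -
      have e: "\<psi> (last \<gamma>) - \<psi> (hd \<gamma>) = int (gdist adj (hd \<gamma>) (last \<gamma>))"
        using eq \<gamma>(2) by blast
      have gn: "gdist adj (hd \<gamma>) (last \<gamma>) = n" using len by (simp add: n_def)
      show ?thesis using e gn hdl by metis
    qed
    finally have "(\<Sum>i<n. 1 - s i) = 0" by (simp add: sum_subtractf)
    then have "\<forall>i\<in>{..<n}. 1 - s i = 0"
      using sle by (subst sum_nonneg_eq_0_iff[symmetric]) auto
    then have "s k = 1" using \<gamma>(3) by (auto simp: n_def)
    then show ?thesis using \<gamma> by (simp add: s_def)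
  qed
  show "\<exists>\<psi>::'a \<Rightarrow> int. (\<forall>x y. r x y \<longrightarrow> \<psi> y = \<psi> x + 1) \<and> (\<forall>x y. \<psi> y - \<psi> x \<le> int (gdist adj x y))"
    using step lip by blast
qed



lemma opath_Cons_Cons[simp]: "opath r (x # y # ys) \<longleftrightarrow> r x y \<and> opath r (y # ys)"
  by (simp add: opath_eq_walk)
lemma opath_single[simp]: "opath r [x]"
  by (simp add: opath_eq_walk)
lemma opath_ne: "opath r \<gamma> \<Longrightarrow> \<gamma> \<noteq> []"
  by (simp add: opath_def)
lemma opath_step: "opath r \<gamma> \<Longrightarrow> Suc i < length \<gamma> \<Longrightarrow> r (\<gamma> ! i) (\<gamma> ! Suc i)"
  by (simp add: opath_def)
lemma opath_append: "opath r a \<Longrightarrow> opath r b \<Longrightarrow> last a = hd b \<Longrightarrow> opath r (a @ tl b)"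
  by (simp add: opath_eq_walk walk_append)
lemma opath_take: "opath r \<gamma> \<Longrightarrow> 0 < n \<Longrightarrow> opath r (take n \<gamma>)"
  by (auto simp: opath_def)
lemma opath_drop: "opath r \<gamma> \<Longrightarrow> n < length \<gamma> \<Longrightarrow> opath r (drop n \<gamma>)"
  by (auto simp: opath_def)

fun gp :: "('a \<Rightarrow> 'a \<Rightarrow> real) \<Rightarrow> 'a list \<Rightarrow> real" where
  "gp G (x # y # ys) = G x y * gp G (y # ys)"
| "gp G _ = 1"

lemma gp_prod: "(\<Prod>i<length \<gamma> - 1. G (\<gamma> ! i) (\<gamma> ! Suc i)) = gp G \<gamma>"
proof (induction G \<gamma> rule: gp.induct)
  case (1 G x y ys)
  then show ?case by (simp add: prod.lessThan_Suc_shift del: prod.lessThan_Suc)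
qed auto

lemma pl_nth: "prod_list (map F xs) = (\<Prod>i<length xs. F (xs ! i))"
  by (induction xs) (simp_all add: prod.lessThan_Suc_shift del: prod.lessThan_Suc)

lemma Pf_prod:
  assumes "2 \<le> length \<gamma>"
  shows "(\<Prod>j\<in>{1..<length \<gamma> - 1}. F (\<gamma> ! j)) = prod_list (map F (butlast (tl \<gamma>)))"
proof -
  obtain n where n: "length \<gamma> = Suc (Suc n)" using assms by (metis add_2_eq_Suc le_Suc_ex)
  have "(\<Prod>j\<in>{1..<length \<gamma> - 1}. F (\<gamma> ! j)) = (\<Prod>j\<in>{Suc 0..<Suc n}. F (\<gamma> ! j))"
    using n by simp
  also have "\<dots> = (\<Prod>i\<in>{0..<n}. F (\<gamma> ! Suc i))" by (rule prod.shift_bounds_Suc_ivl)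
  also have "\<dots> = (\<Prod>i<length (butlast (tl \<gamma>)). F (butlast (tl \<gamma>) ! i))"
    using n by (intro prod.cong) (auto simp: nth_butlast nth_tl)
  finally show ?thesis by (simp add: pl_nth)
qed

lemma Cpath_gp:
  assumes "2 \<le> length \<gamma>"
  shows "Cpath f g t \<gamma> = gp (g t) \<gamma> / prod_list (map (f t) (butlast (tl \<gamma>)))"
proof (cases "length \<gamma> = 2")
  case True
  then obtain a b where "\<gamma> = [a, b]"
    by (metis (no_types, lifting) One_nat_def Suc_1 length_0_conv length_Suc_conv)
  then show ?thesis by (simp add: Cpath_def)
next
  case False
  have "length \<gamma> \<noteq> 1" using assms by simp
  then have "Cpath f g t \<gamma> = (\<Prod>i<length \<gamma> - 1. g t (\<gamma> ! i) (\<gamma> ! Suc i)) / (\<Prod>j\<in>{1..<length \<gamma> - 1}. f t (\<gamma> ! j))"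
    using False by (simp add: Cpath_def)
  then show ?thesis unfolding gp_prod Pf_prod[OF assms] .
qed

lemma gp_app:
  assumes "\<alpha> \<noteq> []" "\<beta> \<noteq> []" "last \<alpha> = hd \<beta>"
  shows "gp G (\<alpha> @ tl \<beta>) = gp G \<alpha> * gp G \<beta>"
  using assms
proof (induction \<alpha> rule: induct_list012)
  case 1 then show ?case by simp
next
  case (2 x) then show ?case by (cases \<beta>) auto
next
  case (3 x y zs) then show ?case by simp
qed

lemma bt_app:
  assumes "2 \<le> length \<alpha>" "2 \<le> length \<beta>"
  shows "butlast (tl (\<alpha> @ tl \<beta>)) = butlast (tl \<alpha>) @ [last \<alpha>] @ butlast (tl \<beta>)"
proof -
  have "length (tl \<alpha>) \<noteq> 0" "length (tl \<beta>) \<noteq> 0" using assms by simp_all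
  then have "tl \<alpha> \<noteq> []" "tl \<beta> \<noteq> []" by (metis list.size(3))+
  have "\<alpha> \<noteq> []" using assms by auto
  have "tl \<alpha> = butlast (tl \<alpha>) @ [last \<alpha>]"
    using \<open>tl \<alpha> \<noteq> []\<close> last_tl append_butlast_last_id by metis
  then show ?thesis using \<open>tl \<beta> \<noteq> []\<close> \<open>\<alpha> \<noteq> []\<close>
    by (metis append.assoc butlast_append tl_append2)
qed

lemma Cpath_app:
  assumes "2 \<le> length \<alpha>" "2 \<le> length \<beta>" "last \<alpha> = hd \<beta>"
  shows "Cpath f g t (\<alpha> @ tl \<beta>) = Cpath f g t \<alpha> * Cpath f g t \<beta> / f t (last \<alpha>)"
proof -
  have ne: "\<alpha> \<noteq> []" "\<beta> \<noteq> []" using assms by auto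
  have l: "2 \<le> length (\<alpha> @ tl \<beta>)" using assms by simp
  show ?thesis
    unfolding Cpath_gp[OF l] Cpath_gp[OF assms(1)] Cpath_gp[OF assms(2)]
      gp_app[OF ne assms(3)] bt_app[OF assms(1,2)]
    by (simp add: divide_inverse inverse_mult_distrib ac_simps)
qed

locale gr =
  fixes r :: "'a \<Rightarrow> 'a \<Rightarrow> bool" and \<psi> :: "'a \<Rightarrow> int"
    and f :: "real \<Rightarrow> 'a \<Rightarrow> real" and g :: "real \<Rightarrow> 'a \<Rightarrow> 'a \<Rightarrow> real"
  assumes finR: "finite {(x, y). r x y}"
    and step: "r x y \<Longrightarrow> \<psi> y = \<psi> x + 1"
    and gpos: "r x y \<Longrightarrow> g 0 x y > 0"
    and fnn: "f 0 x \<ge> 0"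
    and fint: "r x0 x1 \<Longrightarrow> r x1 x2 \<Longrightarrow> f 0 x1 > 0"
begin

definition V where "V = {x. \<exists>y. r x y \<or> r y x}"

lemma finV: "finite V"
proof -
  have "V = fst ` {(x, y). r x y} \<union> snd ` {(x, y). r x y}" unfolding V_def by force
  then show ?thesis using finR by simp
qed

lemma finE: "finite (Eset r x)"
  by (rule finite_subset[OF _ finV]) (auto simp: Eset_def V_def)
lemma finF: "finite (Fset r x)"
  by (rule finite_subset[OF _ finV]) (auto simp: Fset_def V_def)

lemma opath_psi: "opath r \<gamma> \<Longrightarrow> i < length \<gamma> \<Longrightarrow> \<psi> (\<gamma> ! i) = \<psi> (\<gamma> ! 0) + int i"
proof (induction i)
  case 0 then show ?case by simp
next
  case (Suc i)
  then have "r (\<gamma> ! i) (\<gamma> ! Suc i)" by (simp add: opath_step)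
  then have "\<psi> (\<gamma> ! Suc i) = \<psi> (\<gamma> ! i) + 1" by (rule step)
  then show ?case using Suc by simp
qed

lemma opath_idx_le: "opath r \<gamma> \<Longrightarrow> i < length \<gamma> \<Longrightarrow> j < length \<gamma> \<Longrightarrow> \<psi> (\<gamma> ! i) \<le> \<psi> (\<gamma> ! j) \<longleftrightarrow> i \<le> j"
proof -
  assume a: "opath r \<gamma>" "i < length \<gamma>" "j < length \<gamma>"
  have "\<psi> (\<gamma> ! i) = \<psi> (\<gamma> ! 0) + int i" "\<psi> (\<gamma> ! j) = \<psi> (\<gamma> ! 0) + int j"
    using opath_psi a by blast+
  then show ?thesis by linarith
qed

lemma opath_idx_eq: "opath r \<gamma> \<Longrightarrow> i < length \<gamma> \<Longrightarrow> j < length \<gamma> \<Longrightarrow> \<gamma> ! i = \<gamma> ! j \<Longrightarrow> i = j"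
  using opath_idx_le by (metis order_antisym order_refl)

lemma opath_distinct: "opath r \<gamma> \<Longrightarrow> distinct \<gamma>"
  unfolding distinct_conv_nth using opath_idx_eq by blast

lemma opath_hd_last: "opath r \<gamma> \<Longrightarrow> \<psi> (last \<gamma>) = \<psi> (hd \<gamma>) + int (length \<gamma> - 1)"
proof -
  assume a: "opath r \<gamma>"
  have ne: "\<gamma> \<noteq> []" using a by (rule opath_ne)
  have "\<psi> (\<gamma> ! (length \<gamma> - 1)) = \<psi> (\<gamma> ! 0) + int (length \<gamma> - 1)"
    by (rule opath_psi[OF a]) (use ne in simp)
  then show ?thesis using ne by (simp add: last_conv_nth hd_conv_nth)
qed

lemma opath_V: "opath r \<gamma> \<Longrightarrow> 2 \<le> length \<gamma> \<Longrightarrow> set \<gamma> \<subseteq> V"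
proof
  fix x assume a: "opath r \<gamma>" "2 \<le> length \<gamma>" "x \<in> set \<gamma>"
  then obtain i where i: "i < length \<gamma>" "\<gamma> ! i = x" by (auto simp: in_set_conv_nth)
  show "x \<in> V"
  proof (cases "Suc i < length \<gamma>")
    case True then show ?thesis using opath_step[OF a(1) True] i by (auto simp: V_def)
  next
    case False
    then have "i = Suc (i - 1)" "Suc (i - 1) < length \<gamma>" using a i by auto
    then show ?thesis using opath_step[OF a(1), of "i - 1"] i by (auto simp: V_def)
  qed
qed

lemma opath_len: "opath r \<gamma> \<Longrightarrow> 2 \<le> length \<gamma> \<Longrightarrow> length \<gamma> \<le> card V"
proof -
  assume a: "opath r \<gamma>" "2 \<le> length \<gamma>"
  have "length \<gamma> = card (set \<gamma>)" using opath_distinct[OF a(1)] by (simp add: distinct_card)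
  also have "\<dots> \<le> card V" using card_mono[OF finV opath_V[OF a]] .
  finally show ?thesis .
qed

lemma fin_opaths: "finite {\<gamma>. opath r \<gamma> \<and> 2 \<le> length \<gamma>}"
proof (rule finite_subset[OF _ finite_lists_length_le[OF finV, of "card V"]])
  show "{\<gamma>. opath r \<gamma> \<and> 2 \<le> length \<gamma>} \<subseteq> {xs. set xs \<subseteq> V \<and> length xs \<le> card V}"
    using opath_V opath_len by blast
qed


definition S :: "'a set \<Rightarrow> 'a list set" where
  "S X = {\<gamma>. extremal r \<gamma> \<and> X \<subseteq> set \<gamma>}"

definition C :: "'a list \<Rightarrow> real" where "C \<gamma> = Cpath f g 0 \<gamma>"

definition M :: "'a set \<Rightarrow> real" where "M X = (\<Sum>\<gamma>\<in>S X. C \<gamma>)"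

lemma V_notAB: "x \<in> V \<Longrightarrow> x \<in> Asrc r \<Longrightarrow> x \<in> Bsink r \<Longrightarrow> False"
  by (auto simp: V_def Asrc_def Bsink_def Eset_def Fset_def)

lemma notA_V: "x \<notin> Asrc r \<Longrightarrow> x \<in> V"
  by (auto simp: V_def Asrc_def Eset_def)
lemma notB_V: "x \<notin> Bsink r \<Longrightarrow> x \<in> V"
  by (auto simp: V_def Bsink_def Fset_def)

lemma extremal_len:
  assumes "extremal r \<gamma>" "x \<in> set \<gamma>" "x \<in> V"
  shows "2 \<le> length \<gamma>"
proof (rule ccontr)
  assume "\<not> 2 \<le> length \<gamma>"
  moreover have "\<gamma> \<noteq> []" using assms by (auto simp: extremal_def opath_def)
  moreover have "length \<gamma> \<noteq> 0" using calculation(2) by simp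
  ultimately have "length \<gamma> = 1" by linarith
  then obtain y where "\<gamma> = [y]" by (metis One_nat_def length_0_conv length_Suc_conv)
  then show False using assms V_notAB[of x] by (auto simp: extremal_def)
qed

lemma S_fin:
  assumes "x \<in> X" "x \<in> V"
  shows "finite (S X)"
proof (rule finite_subset[OF _ fin_opaths])
  show "S X \<subseteq> {\<gamma>. opath r \<gamma> \<and> 2 \<le> length \<gamma>}"
  proof
    fix \<gamma> assume "\<gamma> \<in> S X"
    then have "extremal r \<gamma>" "x \<in> set \<gamma>" using assms by (auto simp: S_def)
    then show "\<gamma> \<in> {\<gamma>. opath r \<gamma> \<and> 2 \<le> length \<gamma>}"
      using extremal_len[of \<gamma> x] assms by (auto simp: extremal_def)
  qed
qed

lemma C_nn: assumes "opath r \<gamma>" shows "C \<gamma> \<ge> 0"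
proof -
  have g: "g 0 (\<gamma> ! i) (\<gamma> ! Suc i) \<ge> 0" if "i < length \<gamma> - 1" for i
  proof -
    have "Suc i < length \<gamma>" using that by simp
    then show ?thesis using gpos[OF opath_step[OF assms]] less_imp_le by blast
  qed
  show ?thesis
    unfolding C_def Cpath_def
    using fnn g
    by (auto intro!: divide_nonneg_nonneg prod_nonneg)
qed

lemma C_pos: assumes "opath r \<gamma>" "2 \<le> length \<gamma>" shows "C \<gamma> > 0"
proof -
  have g: "g 0 (\<gamma> ! i) (\<gamma> ! Suc i) > 0" if "i < length \<gamma> - 1" for i
    using gpos[OF opath_step[OF assms(1), of i]] that by simp
  have fp: "f 0 (\<gamma> ! j) > 0" if "j \<in> {1..<length \<gamma> - 1}" for j
  proof -
    have "j = Suc (j - 1)" "Suc j < length \<gamma>" using that by auto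
    then have "r (\<gamma> ! (j - 1)) (\<gamma> ! j)" "r (\<gamma> ! j) (\<gamma> ! Suc j)"
      using opath_step[OF assms(1), of "j - 1"] opath_step[OF assms(1), of j] by auto
    then show ?thesis by (rule fint)
  qed
  have "length \<gamma> = 2 \<or> (length \<gamma> \<noteq> 1 \<and> length \<gamma> \<noteq> 2)" using assms(2) by auto
  then show ?thesis
  proof
    assume "length \<gamma> = 2"
    then show ?thesis unfolding C_def Cpath_def using g[of 0] by simp
  next
    assume l: "length \<gamma> \<noteq> 1 \<and> length \<gamma> \<noteq> 2"
    have "0 < (\<Prod>i<length \<gamma> - 1. g 0 (\<gamma> ! i) (\<gamma> ! Suc i))" by (rule prod_pos) (use g in auto)
    moreover have "0 < (\<Prod>j\<in>{1..<length \<gamma> - 1}. f 0 (\<gamma> ! j))" by (rule prod_pos) (use fp in auto)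
    ultimately show ?thesis unfolding C_def Cpath_def using l by simp
  qed
qed

lemma M_nn: "M X \<ge> 0"
  unfolding M_def S_def by (rule sum_nonneg) (auto simp: extremal_def intro: C_nn)

lemma ex_pre: "\<exists>\<alpha>. opath r \<alpha> \<and> last \<alpha> = x \<and> hd \<alpha> \<in> Asrc r"
proof -
  define P where "P L = (\<exists>\<alpha>. opath r \<alpha> \<and> last \<alpha> = x \<and> length \<alpha> = L)" for L
  have P1: "P 1" unfolding P_def by (intro exI[of _ "[x]"]) simp
  have bd: "\<forall>L. P L \<longrightarrow> L \<le> card V + 1"
  proof (intro allI impI)
    fix L assume "P L"
    then obtain \<alpha> where "opath r \<alpha>" "length \<alpha> = L" unfolding P_def by blast
    then show "L \<le> card V + 1" using opath_len[of \<alpha>] by (cases "2 \<le> L") auto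
  qed
  obtain L where L: "P L" "\<forall>L'. P L' \<longrightarrow> L' \<le> L"
    using Nat.ex_has_greatest_nat[OF P1 bd] by blast
  then obtain \<alpha> where \<alpha>: "opath r \<alpha>" "last \<alpha> = x" "length \<alpha> = L" unfolding P_def by blast
  show ?thesis
  proof (cases "hd \<alpha> \<in> Asrc r")
    case True then show ?thesis using \<alpha> by blast
  next
    case False
    then obtain w where w: "r w (hd \<alpha>)" by (auto simp: Asrc_def Eset_def)
    obtain a as where aas: "\<alpha> = a # as" using opath_ne[OF \<alpha>(1)] by (cases \<alpha>) auto
    have "opath r (w # \<alpha>)" using w \<alpha>(1) aas by simp
    moreover have "last (w # \<alpha>) = x" using \<alpha> aas by simp
    ultimately have "P (Suc L)" unfolding P_def using \<alpha>(3) by (intro exI[of _ "w # \<alpha>"]) simp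
    then show ?thesis using L(2) by fastforce
  qed
qed

lemma ex_post: "\<exists>\<beta>. opath r \<beta> \<and> hd \<beta> = x \<and> last \<beta> \<in> Bsink r"
proof -
  define P where "P L = (\<exists>\<beta>. opath r \<beta> \<and> hd \<beta> = x \<and> length \<beta> = L)" for L
  have P1: "P 1" unfolding P_def by (intro exI[of _ "[x]"]) simp
  have bd: "\<forall>L. P L \<longrightarrow> L \<le> card V + 1"
  proof (intro allI impI)
    fix L assume "P L"
    then obtain \<alpha> where "opath r \<alpha>" "length \<alpha> = L" unfolding P_def by blast
    then show "L \<le> card V + 1" using opath_len[of \<alpha>] by (cases "2 \<le> L") auto
  qed
  obtain L where L: "P L" "\<forall>L'. P L' \<longrightarrow> L' \<le> L"
    using Nat.ex_has_greatest_nat[OF P1 bd] by blast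
  then obtain \<beta> where \<beta>: "opath r \<beta>" "hd \<beta> = x" "length \<beta> = L" unfolding P_def by blast
  show ?thesis
  proof (cases "last \<beta> \<in> Bsink r")
    case True then show ?thesis using \<beta> by blast
  next
    case False
    then obtain w where w: "r (last \<beta>) w" by (auto simp: Bsink_def Fset_def)
    have "opath r (\<beta> @ tl [last \<beta>, w])"
      by (rule opath_append) (use \<beta> w in auto)
    moreover have "hd (\<beta> @ [w]) = x" using \<beta> opath_ne[OF \<beta>(1)] by simp
    ultimately have "P (Suc L)" unfolding P_def using \<beta>(3) by (intro exI[of _ "\<beta> @ [w]"]) simp
    then show ?thesis using L(2) by fastforce
  qed
qed

lemma extremal_through: "\<exists>\<gamma>. extremal r \<gamma> \<and> x \<in> set \<gamma>"
proof -
  obtain \<alpha> where \<alpha>: "opath r \<alpha>" "last \<alpha> = x" "hd \<alpha> \<in> Asrc r" using ex_pre by blast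
  obtain \<beta> where \<beta>: "opath r \<beta>" "hd \<beta> = x" "last \<beta> \<in> Bsink r" using ex_post by blast
  have ne: "\<alpha> \<noteq> []" "\<beta> \<noteq> []" using \<alpha> \<beta> opath_ne by auto
  have "opath r (\<alpha> @ tl \<beta>)" using opath_append[OF \<alpha>(1) \<beta>(1)] \<alpha> \<beta> by simp
  moreover have "hd (\<alpha> @ tl \<beta>) \<in> Asrc r" using \<alpha> ne by simp
  moreover have "last (\<alpha> @ tl \<beta>) \<in> Bsink r"
    using \<alpha> \<beta> ne by (cases \<beta>) (auto split: if_splits)
  moreover have "x \<in> set (\<alpha> @ tl \<beta>)" using \<alpha> ne by auto
  ultimately show ?thesis unfolding extremal_def by blast
qed

lemma M_pos: assumes "x \<in> V" shows "M {x} > 0"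
proof -
  obtain \<gamma> where \<gamma>: "extremal r \<gamma>" "x \<in> set \<gamma>" using extremal_through by blast
  have "2 \<le> length \<gamma>" using extremal_len \<gamma> assms by blast
  then have "C \<gamma> > 0" using C_pos \<gamma> by (auto simp: extremal_def)
  moreover have "\<gamma> \<in> S {x}" using \<gamma> by (simp add: S_def)
  ultimately show ?thesis unfolding M_def
    by (intro sum_pos2[OF S_fin[of x "{x}", OF _ assms]]) (auto simp: S_def extremal_def intro: C_nn)
qed


abbreviation m where "m \<equiv> mfun r f g"

lemma m1: "m [x] = M {x}"
proof -
  have "{\<gamma>. extremal r \<gamma> \<and> (\<exists>ks. length ks = length [x] \<and> sorted ks \<and>
             (\<forall>i<length [x]. ks ! i < length \<gamma> \<and> \<gamma> ! (ks ! i) = [x] ! i))} = S {x}"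
  proof (intro set_eqI iffI)
    fix \<gamma> assume "\<gamma> \<in> {\<gamma>. extremal r \<gamma> \<and> (\<exists>ks. length ks = length [x] \<and> sorted ks \<and>
             (\<forall>i<length [x]. ks ! i < length \<gamma> \<and> \<gamma> ! (ks ! i) = [x] ! i))}"
    then show "\<gamma> \<in> S {x}" unfolding S_def by (auto simp: in_set_conv_nth)
  next
    fix \<gamma> assume "\<gamma> \<in> S {x}"
    then obtain k where "extremal r \<gamma>" "k < length \<gamma>" "\<gamma> ! k = x" by (auto simp: S_def in_set_conv_nth)
    then show "\<gamma> \<in> {\<gamma>. extremal r \<gamma> \<and> (\<exists>ks. length ks = length [x] \<and> sorted ks \<and>
             (\<forall>i<length [x]. ks ! i < length \<gamma> \<and> \<gamma> ! (ks ! i) = [x] ! i))}"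
      by (auto intro!: exI[of _ "[k]"])
  qed
  then show ?thesis unfolding mfun_def M_def C_def by simp
qed

lemma m2: assumes "\<psi> x \<le> \<psi> y" shows "m [x, y] = M {x, y}"
proof -
  have "{\<gamma>. extremal r \<gamma> \<and> (\<exists>ks. length ks = length [x, y] \<and> sorted ks \<and>
             (\<forall>i<length [x, y]. ks ! i < length \<gamma> \<and> \<gamma> ! (ks ! i) = [x, y] ! i))} = S {x, y}"
  proof (intro set_eqI iffI)
    fix \<gamma> assume "\<gamma> \<in> {\<gamma>. extremal r \<gamma> \<and> (\<exists>ks. length ks = length [x, y] \<and> sorted ks \<and>
             (\<forall>i<length [x, y]. ks ! i < length \<gamma> \<and> \<gamma> ! (ks ! i) = [x, y] ! i))}"
    then obtain ks where ks: "extremal r \<gamma>" "length ks = length [x, y]"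
      "\<forall>i<length [x, y]. ks ! i < length \<gamma> \<and> \<gamma> ! (ks ! i) = [x, y] ! i" by blast
    have "ks ! 0 < length \<gamma> \<and> \<gamma> ! (ks ! 0) = x" using ks(3) by auto
    moreover have "ks ! 1 < length \<gamma> \<and> \<gamma> ! (ks ! 1) = y" using ks(3) by auto
    ultimately have "x \<in> set \<gamma>" "y \<in> set \<gamma>" using nth_mem by metis+
    then show "\<gamma> \<in> S {x, y}" using \<open>extremal r \<gamma>\<close> unfolding S_def by auto
  next
    fix \<gamma> assume "\<gamma> \<in> S {x, y}"
    then obtain i j where ij: "extremal r \<gamma>" "i < length \<gamma>" "\<gamma> ! i = x" "j < length \<gamma>" "\<gamma> ! j = y"
      by (auto simp: S_def in_set_conv_nth)
    have "opath r \<gamma>" using ij by (simp add: extremal_def)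
    then have "i \<le> j" using opath_idx_le[of \<gamma> i j] ij assms by simp
    then show "\<gamma> \<in> {\<gamma>. extremal r \<gamma> \<and> (\<exists>ks. length ks = length [x, y] \<and> sorted ks \<and>
             (\<forall>i<length [x, y]. ks ! i < length \<gamma> \<and> \<gamma> ! (ks ! i) = [x, y] ! i))}"
      using ij by (auto intro!: exI[of _ "[i, j]"] simp: less_Suc_eq)
  qed
  then show ?thesis unfolding mfun_def M_def C_def by simp
qed

lemma pred_unique:
  assumes "opath r \<gamma>" "y \<in> set \<gamma>" "hd \<gamma> \<noteq> y"
  shows "\<exists>p. {z \<in> Eset r y. z \<in> set \<gamma>} = {p}"
proof -
  obtain k where k: "k < length \<gamma>" "\<gamma> ! k = y" using assms(2) by (auto simp: in_set_conv_nth)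
  have "k \<noteq> 0"
  proof
    assume "k = 0"
    then show False using k assms(3) opath_ne[OF assms(1)] by (simp add: hd_conv_nth)
  qed
  then have k1: "k = Suc (k - 1)" by simp
  have rp: "r (\<gamma> ! (k - 1)) y" using opath_step[OF assms(1), of "k - 1"] k k1 by simp
  have "{z \<in> Eset r y. z \<in> set \<gamma>} = {\<gamma> ! (k - 1)}"
  proof (intro set_eqI iffI)
    fix z assume "z \<in> {z \<in> Eset r y. z \<in> set \<gamma>}"
    then obtain j where j: "j < length \<gamma>" "\<gamma> ! j = z" "r z y" by (auto simp: Eset_def in_set_conv_nth)
    have "\<psi> y = \<psi> z + 1" using j(3) by (rule step)
    moreover have "\<psi> y = \<psi> (\<gamma> ! 0) + int k" using opath_psi[OF assms(1) k(1)] k(2) by simp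
    moreover have "\<psi> z = \<psi> (\<gamma> ! 0) + int j" using opath_psi[OF assms(1) j(1)] j(2) by simp
    ultimately have "k = Suc j" by linarith
    then show "z \<in> {\<gamma> ! (k - 1)}" using j by simp
  next
    fix z assume "z \<in> {\<gamma> ! (k - 1)}"
    then show "z \<in> {z \<in> Eset r y. z \<in> set \<gamma>}" using rp k by (auto simp: Eset_def)
  qed
  then show ?thesis by blast
qed

lemma succ_unique:
  assumes "opath r \<gamma>" "x \<in> set \<gamma>" "last \<gamma> \<noteq> x"
  shows "\<exists>p. {z \<in> Fset r x. z \<in> set \<gamma>} = {p}"
proof -
  obtain k where k: "k < length \<gamma>" "\<gamma> ! k = x" using assms(2) by (auto simp: in_set_conv_nth)
  have "Suc k < length \<gamma>" using k assms(3) opath_ne[OF assms(1)]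
    by (metis Suc_lessI diff_Suc_1 last_conv_nth)
  then have rp: "r x (\<gamma> ! Suc k)" using opath_step[OF assms(1), of k] k by simp
  have "{z \<in> Fset r x. z \<in> set \<gamma>} = {\<gamma> ! Suc k}"
  proof (intro set_eqI iffI)
    fix z assume "z \<in> {z \<in> Fset r x. z \<in> set \<gamma>}"
    then obtain j where j: "j < length \<gamma>" "\<gamma> ! j = z" "r x z" by (auto simp: Fset_def in_set_conv_nth)
    have "\<psi> z = \<psi> x + 1" using j(3) by (rule step)
    moreover have "\<psi> x = \<psi> (\<gamma> ! 0) + int k" using opath_psi[OF assms(1) k(1)] k(2) by simp
    moreover have "\<psi> z = \<psi> (\<gamma> ! 0) + int j" using opath_psi[OF assms(1) j(1)] j(2) by simp
    ultimately have "j = Suc k" by linarith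
    then show "z \<in> {\<gamma> ! Suc k}" using j by simp
  next
    fix z assume "z \<in> {\<gamma> ! Suc k}"
    then show "z \<in> {z \<in> Fset r x. z \<in> set \<gamma>}" using rp \<open>Suc k < length \<gamma>\<close> by (auto simp: Fset_def)
  qed
  then show ?thesis by blast
qed

lemma group_gen:
  assumes "finite T" "finite Z" "\<And>\<gamma>. \<gamma> \<in> T \<Longrightarrow> \<exists>p. {z \<in> Z. z \<in> set \<gamma>} = {p}"
  shows "(\<Sum>\<gamma>\<in>T. C \<gamma>) = (\<Sum>z\<in>Z. \<Sum>\<gamma>\<in>{\<gamma> \<in> T. z \<in> set \<gamma>}. C \<gamma>)"
proof -
  have "(\<Sum>z\<in>Z. \<Sum>\<gamma>\<in>{\<gamma> \<in> T. z \<in> set \<gamma>}. C \<gamma>) = (\<Sum>z\<in>Z. \<Sum>\<gamma>\<in>T. if z \<in> set \<gamma> then C \<gamma> else 0)"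
    using assms(1) by (intro sum.cong[OF refl] sum.inter_filter)
  also have "\<dots> = (\<Sum>\<gamma>\<in>T. \<Sum>z\<in>Z. if z \<in> set \<gamma> then C \<gamma> else 0)" by (rule sum.swap)
  also have "\<dots> = (\<Sum>\<gamma>\<in>T. C \<gamma>)"
  proof (rule sum.cong[OF refl])
    fix \<gamma> assume "\<gamma> \<in> T"
    then obtain p where p: "{z \<in> Z. z \<in> set \<gamma>} = {p}" using assms(3) by blast
    have "(\<Sum>z\<in>Z. if z \<in> set \<gamma> then C \<gamma> else 0) = (\<Sum>z\<in>{z \<in> Z. z \<in> set \<gamma>}. C \<gamma>)"
      by (rule sum.inter_filter[symmetric, OF assms(2)])
    also have "\<dots> = C \<gamma>" using p by simp
    finally show "(\<Sum>z\<in>Z. if z \<in> set \<gamma> then C \<gamma> else 0) = C \<gamma>" .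
  qed
  finally show ?thesis by simp
qed


definition Pre where "Pre z = {\<alpha>. opath r \<alpha> \<and> hd \<alpha> \<in> Asrc r \<and> last \<alpha> = z}"
definition Post where "Post z = {\<beta>. opath r \<beta> \<and> hd \<beta> = z \<and> last \<beta> \<in> Bsink r}"

lemma Pre_len: "z \<notin> Asrc r \<Longrightarrow> \<alpha> \<in> Pre z \<Longrightarrow> 2 \<le> length \<alpha>"
proof (rule ccontr)
  assume a: "z \<notin> Asrc r" "\<alpha> \<in> Pre z" "\<not> 2 \<le> length \<alpha>"
  have "\<alpha> \<noteq> []" using a opath_ne by (auto simp: Pre_def)
  then have "length \<alpha> \<noteq> 0" by simp
  then have "length \<alpha> = 1" using a(3) by linarith
  then obtain y where "\<alpha> = [y]" by (metis One_nat_def length_0_conv length_Suc_conv)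
  then show False using a by (auto simp: Pre_def)
qed

lemma Post_len: "z \<notin> Bsink r \<Longrightarrow> \<beta> \<in> Post z \<Longrightarrow> 2 \<le> length \<beta>"
proof (rule ccontr)
  assume a: "z \<notin> Bsink r" "\<beta> \<in> Post z" "\<not> 2 \<le> length \<beta>"
  have "\<beta> \<noteq> []" using a opath_ne by (auto simp: Post_def)
  then have "length \<beta> \<noteq> 0" by simp
  then have "length \<beta> = 1" using a(3) by linarith
  then obtain y where "\<beta> = [y]" by (metis One_nat_def length_0_conv length_Suc_conv)
  then show False using a by (auto simp: Post_def)
qed

lemma Pre_fin: "z \<notin> Asrc r \<Longrightarrow> finite {\<alpha> \<in> Pre z. P \<alpha>}"
  by (rule finite_subset[OF _ fin_opaths]) (auto simp: Pre_def intro: Pre_len[unfolded Pre_def])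

lemma Post_fin: "z \<notin> Bsink r \<Longrightarrow> finite {\<beta> \<in> Post z. P \<beta>}"
  by (rule finite_subset[OF _ fin_opaths]) (auto simp: Post_def intro: Post_len[unfolded Post_def])

lemma fact:
  assumes zA: "z \<notin> Asrc r" and zB: "z \<notin> Bsink r" and xz: "\<psi> x \<le> \<psi> z" and zy: "\<psi> z \<le> \<psi> y"
  shows "M {x, z, y} = (\<Sum>\<alpha>\<in>{\<alpha> \<in> Pre z. x \<in> set \<alpha>}. C \<alpha>) * (\<Sum>\<beta>\<in>{\<beta> \<in> Post z. y \<in> set \<beta>}. C \<beta>) / f 0 z"
proof -
  define PA where "PA = {\<alpha> \<in> Pre z. x \<in> set \<alpha>}"
  define PB where "PB = {\<beta> \<in> Post z. y \<in> set \<beta>}"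
  have fA: "finite PA" unfolding PA_def by (rule Pre_fin[OF zA])
  have fB: "finite PB" unfolding PB_def by (rule Post_fin[OF zB])
  have "(\<Sum>\<alpha>\<in>PA. C \<alpha>) * (\<Sum>\<beta>\<in>PB. C \<beta>) / f 0 z = (\<Sum>p\<in>PA \<times> PB. C (fst p) * C (snd p) / f 0 z)"
    by (simp add: sum_product sum.cartesian_product sum_divide_distrib case_prod_beta)
  also have "\<dots> = (\<Sum>\<gamma>\<in>S {x, z, y}. C \<gamma>)"
  proof (rule sum.reindex_bij_witness[where j = "\<lambda>p. fst p @ tl (snd p)"
        and i = "\<lambda>\<gamma>. (take (Suc (nat (\<psi> z - \<psi> (hd \<gamma>)))) \<gamma>, drop (nat (\<psi> z - \<psi> (hd \<gamma>))) \<gamma>)"])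
    fix p assume p: "p \<in> PA \<times> PB"
    obtain \<alpha> \<beta> where ab: "p = (\<alpha>, \<beta>)" by force
    have \<alpha>: "opath r \<alpha>" "hd \<alpha> \<in> Asrc r" "last \<alpha> = z" "x \<in> set \<alpha>"
      using p ab by (auto simp: PA_def Pre_def)
    have \<beta>: "opath r \<beta>" "hd \<beta> = z" "last \<beta> \<in> Bsink r" "y \<in> set \<beta>"
      using p ab by (auto simp: PB_def Post_def)
    have la: "2 \<le> length \<alpha>" using Pre_len[OF zA] p ab by (auto simp: PA_def)
    have lb: "2 \<le> length \<beta>" using Post_len[OF zB] p ab by (auto simp: PB_def)
    obtain as where as: "\<alpha> = as @ [z]" using \<alpha>(3) opath_ne[OF \<alpha>(1)]
      by (metis append_butlast_last_id)
    obtain bs where bs: "\<beta> = z # bs" using \<beta>(2) opath_ne[OF \<beta>(1)] by (cases \<beta>) auto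
    have hda: "\<psi> z = \<psi> (hd \<alpha>) + int (length \<alpha> - 1)" using opath_hd_last[OF \<alpha>(1)] \<alpha>(3) by simp
    have hdg: "hd (\<alpha> @ tl \<beta>) = hd \<alpha>" using opath_ne[OF \<alpha>(1)] by simp
    have kk: "nat (\<psi> z - \<psi> (hd (\<alpha> @ tl \<beta>))) = length as" using hda hdg as by simp
    show "(take (Suc (nat (\<psi> z - \<psi> (hd (fst p @ tl (snd p)))))) (fst p @ tl (snd p)),
           drop (nat (\<psi> z - \<psi> (hd (fst p @ tl (snd p))))) (fst p @ tl (snd p))) = p"
      using kk ab as bs by simp
    have op: "opath r (\<alpha> @ tl \<beta>)" using opath_append[OF \<alpha>(1) \<beta>(1)] \<alpha>(3) \<beta>(2) by simp
    have "bs \<noteq> []" using lb bs by auto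
    then have lg: "last (\<alpha> @ tl \<beta>) = last \<beta>" using bs by simp
    have "extremal r (\<alpha> @ tl \<beta>)"
      unfolding extremal_def using op hdg lg \<alpha>(2) \<beta>(3) by simp
    moreover have "{x, z, y} \<subseteq> set (\<alpha> @ tl \<beta>)" using \<alpha> \<beta> as bs by auto
    ultimately show "fst p @ tl (snd p) \<in> S {x, z, y}" using ab by (simp add: S_def)
    show "C (fst p @ tl (snd p)) = C (fst p) * C (snd p) / f 0 z"
      using ab Cpath_app[OF la lb, of f g 0] \<alpha>(3) \<beta>(2) by (simp add: C_def)
  next
    fix \<gamma> assume g: "\<gamma> \<in> S {x, z, y}"
    have e: "extremal r \<gamma>" and op: "opath r \<gamma>" and xin: "x \<in> set \<gamma>" and zin: "z \<in> set \<gamma>" and yin: "y \<in> set \<gamma>"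
      using g by (auto simp: S_def extremal_def)
    obtain k where k: "k < length \<gamma>" "\<gamma> ! k = z" using zin by (auto simp: in_set_conv_nth)
    have ne: "\<gamma> \<noteq> []" using opath_ne[OF op] .
    have pz: "\<psi> z = \<psi> (hd \<gamma>) + int k" using opath_psi[OF op k(1)] k(2) ne by (simp add: hd_conv_nth)
    then have kk: "nat (\<psi> z - \<psi> (hd \<gamma>)) = k" by simp
    show "fst (take (Suc (nat (\<psi> z - \<psi> (hd \<gamma>)))) \<gamma>, drop (nat (\<psi> z - \<psi> (hd \<gamma>))) \<gamma>) @
          tl (snd (take (Suc (nat (\<psi> z - \<psi> (hd \<gamma>)))) \<gamma>, drop (nat (\<psi> z - \<psi> (hd \<gamma>))) \<gamma>)) = \<gamma>"
      unfolding kk by (simp add: tl_drop drop_Suc[symmetric])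
    have "take (Suc k) \<gamma> \<in> PA"
    proof -
      have "opath r (take (Suc k) \<gamma>)" using opath_take[OF op] by simp
      moreover have "hd (take (Suc k) \<gamma>) \<in> Asrc r" using e by (simp add: extremal_def)
      moreover have "last (take (Suc k) \<gamma>) = z" using k by (simp add: take_Suc_conv_app_nth)
      moreover have "x \<in> set (take (Suc k) \<gamma>)"
      proof -
        obtain i where i: "i < length \<gamma>" "\<gamma> ! i = x" using xin by (auto simp: in_set_conv_nth)
        have "i \<le> k" using opath_idx_le[OF op i(1) k(1)] i(2) k(2) xz by simp
        then show ?thesis using i by (metis in_set_conv_nth length_take less_Suc_eq_le min_less_iff_conj nth_take)
      qed
      ultimately show ?thesis by (simp add: PA_def Pre_def)
    qed
    moreover have "drop k \<gamma> \<in> PB"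
    proof -
      have "opath r (drop k \<gamma>)" using opath_drop[OF op k(1)] .
      moreover have "hd (drop k \<gamma>) = z" using k by (simp add: hd_drop_conv_nth)
      moreover have "last (drop k \<gamma>) \<in> Bsink r" using e k by (simp add: extremal_def)
      moreover have "y \<in> set (drop k \<gamma>)"
      proof -
        obtain j where j: "j < length \<gamma>" "\<gamma> ! j = y" using yin by (auto simp: in_set_conv_nth)
        have "k \<le> j" using opath_idx_le[OF op k(1) j(1)] j(2) k(2) zy by simp
        then have "drop k \<gamma> ! (j - k) = y" using j by simp
        moreover have "j - k < length (drop k \<gamma>)" using j \<open>k \<le> j\<close> by simp
        ultimately show ?thesis by (metis nth_mem)
      qed
      ultimately show ?thesis by (simp add: PB_def Post_def)
    qed
    ultimately show "(take (Suc (nat (\<psi> z - \<psi> (hd \<gamma>)))) \<gamma>, drop (nat (\<psi> z - \<psi> (hd \<gamma>))) \<gamma>) \<in> PA \<times> PB"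
      unfolding kk by simp
  qed
  finally show ?thesis unfolding M_def PA_def PB_def by simp
qed

lemma markov:
  assumes "z \<notin> Asrc r" "z \<notin> Bsink r" "\<psi> x \<le> \<psi> z" "\<psi> z \<le> \<psi> y"
  shows "M {x, z} * M {z, y} = M {z} * M {x, z, y}"
proof -
  have e1: "M {x, z} = (\<Sum>\<alpha>\<in>{\<alpha> \<in> Pre z. x \<in> set \<alpha>}. C \<alpha>) * (\<Sum>\<beta>\<in>{\<beta> \<in> Post z. z \<in> set \<beta>}. C \<beta>) / f 0 z"
    using fact[OF assms(1,2,3), of z] by simp
  have e2: "M {z, y} = (\<Sum>\<alpha>\<in>{\<alpha> \<in> Pre z. z \<in> set \<alpha>}. C \<alpha>) * (\<Sum>\<beta>\<in>{\<beta> \<in> Post z. y \<in> set \<beta>}. C \<beta>) / f 0 z"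
    using fact[OF assms(1,2) _ assms(4), of z] by simp
  have e3: "M {z} = (\<Sum>\<alpha>\<in>{\<alpha> \<in> Pre z. z \<in> set \<alpha>}. C \<alpha>) * (\<Sum>\<beta>\<in>{\<beta> \<in> Post z. z \<in> set \<beta>}. C \<beta>) / f 0 z"
    using fact[OF assms(1,2), of z z] by simp
  show ?thesis unfolding e1 e2 e3 fact[OF assms] by (simp add: field_simps)
qed


lemma m_nn: "m zs \<ge> 0"
  unfolding mfun_def by (rule sum_nonneg) (auto simp: extremal_def intro: C_nn[unfolded C_def])

lemma Kker_nn: "Kker r m x y \<ge> 0"
  unfolding Kker_def using m_nn by (auto intro: divide_nonneg_nonneg)
lemma Kstar_nn: "Kstar r m x y \<ge> 0"
  unfolding Kstar_def using m_nn by (auto intro: divide_nonneg_nonneg)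

lemma group_pred:
  assumes "finite T" "\<And>\<gamma>. \<gamma> \<in> T \<Longrightarrow> opath r \<gamma> \<and> y \<in> set \<gamma> \<and> hd \<gamma> \<noteq> y"
  shows "(\<Sum>\<gamma>\<in>T. C \<gamma>) = (\<Sum>z\<in>Eset r y. \<Sum>\<gamma>\<in>{\<gamma> \<in> T. z \<in> set \<gamma>}. C \<gamma>)"
  by (rule group_gen[OF assms(1) finE]) (use assms(2) pred_unique in blast)

lemma group_succ:
  assumes "finite T" "\<And>\<gamma>. \<gamma> \<in> T \<Longrightarrow> opath r \<gamma> \<and> x \<in> set \<gamma> \<and> last \<gamma> \<noteq> x"
  shows "(\<Sum>\<gamma>\<in>T. C \<gamma>) = (\<Sum>z\<in>Fset r x. \<Sum>\<gamma>\<in>{\<gamma> \<in> T. z \<in> set \<gamma>}. C \<gamma>)"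
  by (rule group_gen[OF assms(1) finF]) (use assms(2) succ_unique in blast)

lemma hd_psi: "opath r \<gamma> \<Longrightarrow> x \<in> set \<gamma> \<Longrightarrow> \<psi> (hd \<gamma>) \<le> \<psi> x"
proof -
  assume a: "opath r \<gamma>" "x \<in> set \<gamma>"
  then obtain i where i: "i < length \<gamma>" "\<gamma> ! i = x" by (auto simp: in_set_conv_nth)
  have "\<psi> x = \<psi> (\<gamma> ! 0) + int i" using opath_psi[OF a(1) i(1)] i(2) by simp
  then show ?thesis using opath_ne[OF a(1)] by (simp add: hd_conv_nth)
qed

lemma last_psi: "opath r \<gamma> \<Longrightarrow> x \<in> set \<gamma> \<Longrightarrow> \<psi> x \<le> \<psi> (last \<gamma>)"
proof -
  assume a: "opath r \<gamma>" "x \<in> set \<gamma>"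
  then obtain i where i: "i < length \<gamma>" "\<gamma> ! i = x" by (auto simp: in_set_conv_nth)
  have "\<psi> x = \<psi> (\<gamma> ! 0) + int i" using opath_psi[OF a(1) i(1)] i(2) by simp
  moreover have "\<psi> (last \<gamma>) = \<psi> (hd \<gamma>) + int (length \<gamma> - 1)" by (rule opath_hd_last[OF a(1)])
  ultimately show ?thesis using opath_ne[OF a(1)] i(1) by (simp add: hd_conv_nth)
qed

lemma sub_oleq:
  assumes "opath r \<gamma>" "a \<in> set \<gamma>" "b \<in> set \<gamma>" "\<psi> a \<le> \<psi> b"
  shows "oleq r a b"
proof -
  obtain i where i: "i < length \<gamma>" "\<gamma> ! i = a" using assms(2) by (auto simp: in_set_conv_nth)
  obtain j where j: "j < length \<gamma>" "\<gamma> ! j = b" using assms(3) by (auto simp: in_set_conv_nth)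
  have ij: "i \<le> j" using opath_idx_le[OF assms(1) i(1) j(1)] i(2) j(2) assms(4) by simp
  define sub where "sub = take (Suc (j - i)) (drop i \<gamma>)"
  have "opath r sub" unfolding sub_def by (rule opath_take[OF opath_drop[OF assms(1) i(1)]]) simp
  moreover have "hd sub = a" unfolding sub_def using i by (simp add: hd_drop_conv_nth)
  moreover have "last sub = b" unfolding sub_def using i j ij
    by (simp add: take_Suc_conv_app_nth)
  ultimately show ?thesis unfolding oleq_def by blast
qed

lemma oleq_path:
  assumes "oleq r a b"
  obtains \<gamma> where "opath r \<gamma>" "hd \<gamma> = a" "last \<gamma> = b" "\<psi> b = \<psi> a + int (length \<gamma> - 1)"
  using assms opath_hd_last unfolding oleq_def by blast

lemma oleq_notA:
  assumes "oleq r a b" "\<psi> a < \<psi> b"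
  shows "b \<notin> Asrc r"
proof -
  obtain \<gamma> where \<gamma>: "opath r \<gamma>" "hd \<gamma> = a" "last \<gamma> = b" "\<psi> b = \<psi> a + int (length \<gamma> - 1)"
    using oleq_path[OF assms(1)] by blast
  have l: "Suc (length \<gamma> - 2) < length \<gamma>" "Suc (length \<gamma> - 2) = length \<gamma> - 1" using \<gamma>(4) assms(2) by auto
  have "r (\<gamma> ! (length \<gamma> - 2)) (\<gamma> ! Suc (length \<gamma> - 2))" using opath_step[OF \<gamma>(1) l(1)] .
  then have "r (\<gamma> ! (length \<gamma> - 2)) b" using l(2) \<gamma>(3) opath_ne[OF \<gamma>(1)] by (simp add: last_conv_nth)
  then show ?thesis by (auto simp: Asrc_def Eset_def)
qed

lemma oleq_notB:
  assumes "oleq r a b" "\<psi> a < \<psi> b"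
  shows "a \<notin> Bsink r"
proof -
  obtain \<gamma> where \<gamma>: "opath r \<gamma>" "hd \<gamma> = a" "last \<gamma> = b" "\<psi> b = \<psi> a + int (length \<gamma> - 1)"
    using oleq_path[OF assms(1)] by blast
  have l: "Suc 0 < length \<gamma>" using \<gamma>(4) assms(2) by auto
  have "r (\<gamma> ! 0) (\<gamma> ! Suc 0)" using opath_step[OF \<gamma>(1) l] .
  then have "r a (\<gamma> ! Suc 0)" using \<gamma>(2) opath_ne[OF \<gamma>(1)] by (simp add: hd_conv_nth)
  then show ?thesis by (auto simp: Bsink_def Fset_def)
qed

lemma S_nonoleq:
  assumes "\<not> oleq r a b" "\<psi> a \<le> \<psi> b"
  shows "S {a, b, c} = {}" "S {c, a, b} = {}"
  using sub_oleq assms by (auto simp: S_def extremal_def)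

lemma sumM_pred:
  assumes "y \<notin> Asrc r"
  shows "(\<Sum>x0\<in>Eset r y. M {x0, y}) = M {y}"
proof -
  have yV: "y \<in> V" using notA_V[OF assms] .
  have "M {y} = (\<Sum>z\<in>Eset r y. \<Sum>\<gamma>\<in>{\<gamma> \<in> S {y}. z \<in> set \<gamma>}. C \<gamma>)"
    unfolding M_def
  proof (rule group_pred[OF S_fin[OF _ yV]])
    fix \<gamma> assume "\<gamma> \<in> S {y}"
    then show "opath r \<gamma> \<and> y \<in> set \<gamma> \<and> hd \<gamma> \<noteq> y" using assms by (auto simp: S_def extremal_def)
  qed simp
  also have "\<dots> = (\<Sum>z\<in>Eset r y. M {z, y})"
    unfolding M_def by (intro sum.cong refl arg_cong[where f = "\<lambda>A. sum C A"]) (auto simp: S_def)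
  finally show ?thesis by simp
qed

lemma sumM_succ:
  assumes "y \<notin> Bsink r"
  shows "(\<Sum>x1\<in>Fset r y. M {y, x1}) = M {y}"
proof -
  have yV: "y \<in> V" using notB_V[OF assms] .
  have "M {y} = (\<Sum>z\<in>Fset r y. \<Sum>\<gamma>\<in>{\<gamma> \<in> S {y}. z \<in> set \<gamma>}. C \<gamma>)"
    unfolding M_def
  proof (rule group_succ[OF S_fin[OF _ yV]])
    fix \<gamma> assume "\<gamma> \<in> S {y}"
    then show "opath r \<gamma> \<and> y \<in> set \<gamma> \<and> last \<gamma> \<noteq> y" using assms by (auto simp: S_def extremal_def)
  qed simp
  also have "\<dots> = (\<Sum>z\<in>Fset r y. M {y, z})"
    unfolding M_def by (intro sum.cong refl arg_cong[where f = "\<lambda>A. sum C A"]) (auto simp: S_def)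
  finally show ?thesis by simp
qed

lemma R1:
  assumes "x1 \<notin> Asrc r"
  shows "(\<Sum>x0\<in>Eset r x1. Kker r m x1 x0) = 1"
proof -
  have pos: "M {x1} > 0" using M_pos[OF notA_V[OF assms]] .
  have "(\<Sum>x0\<in>Eset r x1. Kker r m x1 x0) = (\<Sum>x0\<in>Eset r x1. M {x0, x1} / M {x1})"
  proof (rule sum.cong[OF refl])
    fix x0 assume "x0 \<in> Eset r x1"
    then have "r x0 x1" by (simp add: Eset_def)
    then have "\<psi> x0 \<le> \<psi> x1" using step by force
    then show "Kker r m x1 x0 = M {x0, x1} / M {x1}" using \<open>r x0 x1\<close> by (simp add: Kker_def m1 m2)
  qed
  also have "\<dots> = M {x1} / M {x1}" by (simp add: sum_divide_distrib[symmetric] sumM_pred[OF assms])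
  finally show ?thesis using pos by simp
qed

lemma R2:
  assumes "x0 \<notin> Bsink r"
  shows "(\<Sum>x1\<in>Fset r x0. Kstar r m x0 x1) = 1"
proof -
  have pos: "M {x0} > 0" using M_pos[OF notB_V[OF assms]] .
  have "(\<Sum>x1\<in>Fset r x0. Kstar r m x0 x1) = (\<Sum>x1\<in>Fset r x0. M {x0, x1} / M {x0})"
  proof (rule sum.cong[OF refl])
    fix x1 assume "x1 \<in> Fset r x0"
    then have "r x0 x1" by (simp add: Fset_def)
    then have "\<psi> x0 \<le> \<psi> x1" using step by force
    then show "Kstar r m x0 x1 = M {x0, x1} / M {x0}" using \<open>r x0 x1\<close> by (simp add: Kstar_def m1 m2)
  qed
  also have "\<dots> = M {x0} / M {x0}" by (simp add: sum_divide_distrib[symmetric] sumM_succ[OF assms])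
  finally show ?thesis using pos by simp
qed


lemma Kop_m: "Kop r m u x * m [x] = (\<Sum>x0\<in>Eset r x. M {x0, x} * u x0)"
proof (cases "x \<in> Asrc r")
  case True then show ?thesis by (simp add: Kop_def Asrc_def)
next
  case False
  have pos: "M {x} > 0" using M_pos[OF notA_V[OF False]] .
  have "Kop r m u x * m [x] = (\<Sum>x0\<in>Eset r x. Kker r m x x0 * u x0 * M {x})"
    by (simp add: Kop_def m1 sum_distrib_right)
  also have "\<dots> = (\<Sum>x0\<in>Eset r x. M {x0, x} * u x0)"
  proof (rule sum.cong[OF refl])
    fix x0 assume "x0 \<in> Eset r x"
    then have "r x0 x" by (simp add: Eset_def)
    then have "\<psi> x0 \<le> \<psi> x" using step by force
    then show "Kker r m x x0 * u x0 * M {x} = M {x0, x} * u x0"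
      using \<open>r x0 x\<close> pos by (simp add: Kker_def m1 m2)
  qed
  finally show ?thesis .
qed

lemma Kstarop_m: "Kstarop r m v x * m [x] = (\<Sum>x1\<in>Fset r x. M {x, x1} * v x1)"
proof (cases "x \<in> Bsink r")
  case True then show ?thesis by (simp add: Kstarop_def Bsink_def)
next
  case False
  have pos: "M {x} > 0" using M_pos[OF notB_V[OF False]] .
  have "Kstarop r m v x * m [x] = (\<Sum>x1\<in>Fset r x. Kstar r m x x1 * v x1 * M {x})"
    by (simp add: Kstarop_def m1 sum_distrib_right)
  also have "\<dots> = (\<Sum>x1\<in>Fset r x. M {x, x1} * v x1)"
  proof (rule sum.cong[OF refl])
    fix x1 assume "x1 \<in> Fset r x"
    then have "r x x1" by (simp add: Fset_def)
    then have "\<psi> x \<le> \<psi> x1" using step by force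
    then show "Kstar r m x x1 * v x1 * M {x} = M {x, x1} * v x1"
      using \<open>r x x1\<close> pos by (simp add: Kstar_def m1 m2)
  qed
  finally show ?thesis .
qed

lemma infsum_V:
  assumes "\<And>x. x \<notin> V \<Longrightarrow> h x = 0"
  shows "(\<Sum>\<^sub>\<infinity>x. h x) = (\<Sum>x\<in>V. h x)"
proof -
  have "(\<Sum>\<^sub>\<infinity>x. h x) = (\<Sum>\<^sub>\<infinity>x\<in>V. h x)"
    by (rule infsum_cong_neutral) (use assms in auto)
  also have "\<dots> = (\<Sum>x\<in>V. h x)" using finV by simp
  finally show ?thesis .
qed

lemma EV: "Eset r x = {x0 \<in> V. r x0 x}" by (auto simp: Eset_def V_def)
lemma FV: "Fset r x = {x1 \<in> V. r x x1}" by (auto simp: Fset_def V_def)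

lemma R3: "mscal m (Kop r m u) v = mscal m u (Kstarop r m v)"
proof -
  have L: "mscal m (Kop r m u) v = (\<Sum>x\<in>V. \<Sum>x0\<in>Eset r x. M {x0, x} * u x0 * v x)"
    unfolding mscal_def
  proof -
    have eq: "Kop r m u x * v x * m [x] = (\<Sum>x0\<in>Eset r x. M {x0, x} * u x0 * v x)" for x
    proof -
      have "Kop r m u x * v x * m [x] = (Kop r m u x * m [x]) * v x" by (simp add: mult_ac)
      also have "\<dots> = (\<Sum>x0\<in>Eset r x. M {x0, x} * u x0) * v x" unfolding Kop_m ..
      finally show ?thesis by (simp add: sum_distrib_right)
    qed
    have z: "x \<notin> V \<Longrightarrow> Eset r x = {}" for x by (auto simp: Eset_def V_def)
    show "(\<Sum>\<^sub>\<infinity>x. Kop r m u x * v x * m [x]) = (\<Sum>x\<in>V. \<Sum>x0\<in>Eset r x. M {x0, x} * u x0 * v x)"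
      unfolding eq by (rule infsum_V) (simp add: z)
  qed
  have R: "mscal m u (Kstarop r m v) = (\<Sum>x\<in>V. \<Sum>x1\<in>Fset r x. u x * M {x, x1} * v x1)"
    unfolding mscal_def
  proof -
    have eq: "u x * Kstarop r m v x * m [x] = (\<Sum>x1\<in>Fset r x. u x * M {x, x1} * v x1)" for x
    proof -
      have "u x * Kstarop r m v x * m [x] = u x * (Kstarop r m v x * m [x])" by (simp add: mult_ac)
      also have "\<dots> = u x * (\<Sum>x1\<in>Fset r x. M {x, x1} * v x1)" unfolding Kstarop_m ..
      finally show ?thesis by (simp add: sum_distrib_left mult_ac)
    qed
    have z: "x \<notin> V \<Longrightarrow> Fset r x = {}" for x by (auto simp: Fset_def V_def)
    show "(\<Sum>\<^sub>\<infinity>x. u x * Kstarop r m v x * m [x]) = (\<Sum>x\<in>V. \<Sum>x1\<in>Fset r x. u x * M {x, x1} * v x1)"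
      unfolding eq by (rule infsum_V) (simp add: z)
  qed
  have "(\<Sum>x\<in>V. \<Sum>x0\<in>Eset r x. M {x0, x} * u x0 * v x) = (\<Sum>x0\<in>V. \<Sum>x\<in>Fset r x0. M {x0, x} * u x0 * v x)"
    unfolding EV FV by (rule sum.swap_restrict[OF finV finV])
  then show ?thesis unfolding L R by (simp add: algebra_simps)
qed

lemma Kop_pow_nz:
  "(Kop r m ^^ N) u x \<noteq> 0 \<Longrightarrow> \<exists>\<gamma>. opath r \<gamma> \<and> last \<gamma> = x \<and> length \<gamma> = Suc N"
proof (induction N arbitrary: x)
  case 0 then show ?case by (intro exI[of _ "[x]"]) simp
next
  case (Suc N)
  then have "Kop r m ((Kop r m ^^ N) u) x \<noteq> 0" by simp
  then have "(\<Sum>x0\<in>Eset r x. Kker r m x x0 * (Kop r m ^^ N) u x0) \<noteq> 0"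
    unfolding Kop_def[of r m "(Kop r m ^^ N) u" x] .
  then obtain x0 where x0: "x0 \<in> Eset r x" "(Kop r m ^^ N) u x0 \<noteq> 0"
    by (metis (no_types, lifting) mult_zero_right sum.neutral)
  then obtain \<alpha> where \<alpha>: "opath r \<alpha>" "last \<alpha> = x0" "length \<alpha> = Suc N" using Suc.IH by blast
  have "opath r (\<alpha> @ tl [x0, x])" by (rule opath_append) (use \<alpha> x0 in \<open>auto simp: Eset_def\<close>)
  then show ?case using \<alpha> by (intro exI[of _ "\<alpha> @ [x]"]) simp
qed

lemma Kstarop_pow_nz:
  "(Kstarop r m ^^ N) u x \<noteq> 0 \<Longrightarrow> \<exists>\<gamma>. opath r \<gamma> \<and> hd \<gamma> = x \<and> length \<gamma> = Suc N"
proof (induction N arbitrary: x)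
  case 0 then show ?case by (intro exI[of _ "[x]"]) simp
next
  case (Suc N)
  then have "Kstarop r m ((Kstarop r m ^^ N) u) x \<noteq> 0" by simp
  then have "(\<Sum>x1\<in>Fset r x. Kstar r m x x1 * (Kstarop r m ^^ N) u x1) \<noteq> 0"
    unfolding Kstarop_def[of r m "(Kstarop r m ^^ N) u" x] .
  then obtain x1 where x1: "x1 \<in> Fset r x" "(Kstarop r m ^^ N) u x1 \<noteq> 0"
    by (metis (no_types, lifting) mult_zero_right sum.neutral)
  then obtain \<beta> where \<beta>: "opath r \<beta>" "hd \<beta> = x1" "length \<beta> = Suc N" using Suc.IH by blast
  have "opath r ([x, x1] @ tl \<beta>)" by (rule opath_append) (use \<beta> x1 in \<open>auto simp: Fset_def\<close>)
  moreover have "[x, x1] @ tl \<beta> = x # \<beta>" using \<beta> opath_ne[OF \<beta>(1)] by (cases \<beta>) auto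
  ultimately have "opath r (x # \<beta>)" by metis
  then show ?case using \<beta> by (intro exI[of _ "x # \<beta>"]) simp
qed

lemma R6: "\<exists>N. \<forall>u. (Kop r m ^^ N) u = (\<lambda>_. 0)"
proof (intro exI allI ext)
  fix u x
  show "(Kop r m ^^ (card V + 1)) u x = 0"
  proof (rule ccontr)
    assume "(Kop r m ^^ (card V + 1)) u x \<noteq> 0"
    then obtain \<gamma> where "opath r \<gamma>" "length \<gamma> = Suc (card V + 1)" using Kop_pow_nz by blast
    then show False using opath_len[of \<gamma>] by simp
  qed
qed

lemma R6': "\<exists>N. \<forall>u. (Kstarop r m ^^ N) u = (\<lambda>_. 0)"
proof (intro exI allI ext)
  fix u x
  show "(Kstarop r m ^^ (card V + 1)) u x = 0"
  proof (rule ccontr)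
    assume "(Kstarop r m ^^ (card V + 1)) u x \<noteq> 0"
    then obtain \<gamma> where "opath r \<gamma>" "length \<gamma> = Suc (card V + 1)" using Kstarop_pow_nz by blast
    then show False using opath_len[of \<gamma>] by simp
  qed
qed


lemma Kpow_nn: "Kpow r m n y x \<ge> 0"
  by (induction n arbitrary: y) (auto intro!: sum_nonneg mult_nonneg_nonneg Kker_nn)

lemma Kstarpow_nn: "Kstarpow r m n x y \<ge> 0"
  by (induction n arbitrary: x) (auto intro!: sum_nonneg mult_nonneg_nonneg Kstar_nn)

lemma Kpow_nz:
  "Kpow r m n y x \<noteq> 0 \<Longrightarrow> \<exists>\<gamma>. opath r \<gamma> \<and> hd \<gamma> = x \<and> last \<gamma> = y \<and> length \<gamma> = Suc n"
proof (induction n arbitrary: y)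
  case 0 then show ?case by (intro exI[of _ "[x]"]) (simp split: if_splits)
next
  case (Suc n)
  then have "(\<Sum>z\<in>Eset r y. Kker r m y z * Kpow r m n z x) \<noteq> 0" by simp
  then obtain z where z: "z \<in> Eset r y" "Kpow r m n z x \<noteq> 0"
    by (metis (no_types, lifting) mult_zero_right sum.neutral)
  then obtain \<alpha> where \<alpha>: "opath r \<alpha>" "hd \<alpha> = x" "last \<alpha> = z" "length \<alpha> = Suc n" using Suc.IH by blast
  have "opath r (\<alpha> @ tl [z, y])" by (rule opath_append) (use \<alpha> z in \<open>auto simp: Eset_def\<close>)
  then show ?case using \<alpha> opath_ne[OF \<alpha>(1)] by (intro exI[of _ "\<alpha> @ [y]"]) simp
qed

lemma Kstarpow_nz:
  "Kstarpow r m n x y \<noteq> 0 \<Longrightarrow> \<exists>\<gamma>. opath r \<gamma> \<and> hd \<gamma> = x \<and> last \<gamma> = y \<and> length \<gamma> = Suc n"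
proof (induction n arbitrary: x)
  case 0 then show ?case by (intro exI[of _ "[x]"]) (simp split: if_splits)
next
  case (Suc n)
  then have "(\<Sum>z\<in>Fset r x. Kstar r m x z * Kstarpow r m n z y) \<noteq> 0" by simp
  then obtain z where z: "z \<in> Fset r x" "Kstarpow r m n z y \<noteq> 0"
    by (metis (no_types, lifting) mult_zero_right sum.neutral)
  then obtain \<beta> where \<beta>: "opath r \<beta>" "hd \<beta> = z" "last \<beta> = y" "length \<beta> = Suc n" using Suc.IH by blast
  have "opath r ([x, z] @ tl \<beta>)" by (rule opath_append) (use \<beta> z in \<open>auto simp: Fset_def\<close>)
  moreover have "[x, z] @ tl \<beta> = x # \<beta>" using \<beta> opath_ne[OF \<beta>(1)] by (cases \<beta>) auto
  ultimately have "opath r (x # \<beta>)" by metis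
  then show ?case using \<beta> opath_ne[OF \<beta>(1)] by (intro exI[of _ "x # \<beta>"]) simp
qed

lemma path_oleq: "opath r \<gamma> \<Longrightarrow> hd \<gamma> = x \<Longrightarrow> last \<gamma> = y \<Longrightarrow> oleq r x y"
  unfolding oleq_def by blast

lemma sumM3_pred:
  assumes "\<psi> x0 < \<psi> y" "y \<in> V"
  shows "(\<Sum>z\<in>Eset r y. M {x0, z, y}) = M {x0, y}"
proof -
  have "M {x0, y} = (\<Sum>z\<in>Eset r y. \<Sum>\<gamma>\<in>{\<gamma> \<in> S {x0, y}. z \<in> set \<gamma>}. C \<gamma>)"
    unfolding M_def
  proof (rule group_pred[OF S_fin[OF _ assms(2)]])
    fix \<gamma> assume g: "\<gamma> \<in> S {x0, y}"
    then have "opath r \<gamma>" "x0 \<in> set \<gamma>" "y \<in> set \<gamma>" by (auto simp: S_def extremal_def)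
    moreover have "hd \<gamma> \<noteq> y" using hd_psi[OF calculation(1,2)] assms(1) by auto
    ultimately show "opath r \<gamma> \<and> y \<in> set \<gamma> \<and> hd \<gamma> \<noteq> y" by simp
  qed simp
  also have "\<dots> = (\<Sum>z\<in>Eset r y. M {x0, z, y})"
    unfolding M_def by (intro sum.cong refl arg_cong[where f = "\<lambda>A. sum C A"]) (auto simp: S_def)
  finally show ?thesis by simp
qed

lemma sumM3_succ:
  assumes "\<psi> x < \<psi> y" "x \<in> V"
  shows "(\<Sum>z\<in>Fset r x. M {x, z, y}) = M {x, y}"
proof -
  have "M {x, y} = (\<Sum>z\<in>Fset r x. \<Sum>\<gamma>\<in>{\<gamma> \<in> S {x, y}. z \<in> set \<gamma>}. C \<gamma>)"
    unfolding M_def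
  proof (rule group_succ[OF S_fin[OF _ assms(2)]])
    fix \<gamma> assume g: "\<gamma> \<in> S {x, y}"
    then have "opath r \<gamma>" "x \<in> set \<gamma>" "y \<in> set \<gamma>" by (auto simp: S_def extremal_def)
    moreover have "last \<gamma> \<noteq> x" using last_psi[OF calculation(1,3)] assms(1) by auto
    ultimately show "opath r \<gamma> \<and> x \<in> set \<gamma> \<and> last \<gamma> \<noteq> x" by simp
  qed simp
  also have "\<dots> = (\<Sum>z\<in>Fset r x. M {x, z, y})"
    unfolding M_def by (intro sum.cong refl arg_cong[where f = "\<lambda>A. sum C A"]) (auto simp: S_def)
  finally show ?thesis by simp
qed

lemma R4b:
  assumes "1 \<le> n"
  shows "oleq r x0 xn \<Longrightarrow> \<psi> xn = \<psi> x0 + int n \<Longrightarrow> Kpow r m n xn x0 = m [x0, xn] / m [xn]"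
  using assms
proof (induction n arbitrary: xn rule: nat_induct_at_least)
  case base
  obtain \<gamma> where \<gamma>: "opath r \<gamma>" "hd \<gamma> = x0" "last \<gamma> = xn" "\<psi> xn = \<psi> x0 + int (length \<gamma> - 1)"
    using oleq_path[OF base(1)] by blast
  have "length \<gamma> = 2" using \<gamma>(4) base(2) opath_ne[OF \<gamma>(1)] by simp
  then have "Suc 0 < length \<gamma>" by simp
  then have rx: "r x0 xn" using opath_step[OF \<gamma>(1), of 0] \<gamma> \<open>length \<gamma> = 2\<close> opath_ne[OF \<gamma>(1)]
    by (simp add: hd_conv_nth last_conv_nth)
  have "Kpow r m 1 xn x0 = (\<Sum>z\<in>Eset r xn. if z = x0 then Kker r m xn z else 0)"
    by (simp add: if_distrib cong: if_cong)
  also have "\<dots> = Kker r m xn x0" using rx by (subst sum.delta[OF finE]) (simp add: Eset_def)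
  finally show ?case using rx by (simp add: Kker_def)
next
  case (Suc n)
  have xnA: "xn \<notin> Asrc r" using oleq_notA[OF Suc.prems(1)] Suc.prems(2) by simp
  have posn: "M {xn} > 0" using M_pos[OF notA_V[OF xnA]] .
  have trm: "Kker r m xn z * Kpow r m n z x0 = M {x0, z, xn} / M {xn}" if zE: "z \<in> Eset r xn" for z
  proof -
    have rz: "r z xn" using zE by (simp add: Eset_def)
    have pz: "\<psi> xn = \<psi> z + 1" using rz by (rule step)
    show ?thesis
    proof (cases "oleq r x0 z")
      case True
      have psz: "\<psi> z = \<psi> x0 + int n" using pz Suc.prems(2) by simp
      have IH: "Kpow r m n z x0 = m [x0, z] / m [z]" using Suc.IH[OF True psz] .
      have zA: "z \<notin> Asrc r" using oleq_notA[OF True] psz Suc.hyps by simp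
      have zB: "z \<notin> Bsink r" using rz by (auto simp: Bsink_def Fset_def)
      have posz: "M {z} > 0" using M_pos[OF notA_V[OF zA]] .
      have mk: "M {x0, z} * M {z, xn} = M {z} * M {x0, z, xn}"
        by (rule markov[OF zA zB]) (use psz pz in simp_all)
      have "Kker r m xn z * Kpow r m n z x0 = M {z, xn} / M {xn} * (M {x0, z} / M {z})"
        using rz IH psz pz by (simp add: Kker_def m1 m2)
      also have "\<dots> = M {x0, z, xn} / M {xn}" using mk posz by (simp add: field_simps)
      finally show ?thesis .
    next
      case False
      have "Kpow r m n z x0 = 0" using Kpow_nz[of n z x0] False path_oleq by blast
      moreover have "S {x0, z, xn} = {}" using S_nonoleq(1)[OF False] pz Suc.prems(2) by simp
      ultimately show ?thesis by (simp add: M_def)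
    qed
  qed
  have "Kpow r m (Suc n) xn x0 = (\<Sum>z\<in>Eset r xn. M {x0, z, xn} / M {xn})"
    using trm by simp
  also have "\<dots> = M {x0, xn} / M {xn}"
    using sumM3_pred[of x0 xn] Suc.prems(2) notA_V[OF xnA] by (simp add: sum_divide_distrib[symmetric])
  also have "\<dots> = m [x0, xn] / m [xn]" using Suc.prems(2) by (simp add: m1 m2)
  finally show ?case .
qed

lemma R5b:
  assumes "1 \<le> n"
  shows "oleq r x0 xn \<Longrightarrow> \<psi> xn = \<psi> x0 + int n \<Longrightarrow> Kstarpow r m n x0 xn = m [x0, xn] / m [x0]"
  using assms
proof (induction n arbitrary: x0 rule: nat_induct_at_least)
  case base
  obtain \<gamma> where \<gamma>: "opath r \<gamma>" "hd \<gamma> = x0" "last \<gamma> = xn" "\<psi> xn = \<psi> x0 + int (length \<gamma> - 1)"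
    using oleq_path[OF base(1)] by blast
  have "length \<gamma> = 2" using \<gamma>(4) base(2) opath_ne[OF \<gamma>(1)] by simp
  then have "Suc 0 < length \<gamma>" by simp
  then have rx: "r x0 xn" using opath_step[OF \<gamma>(1), of 0] \<gamma> \<open>length \<gamma> = 2\<close> opath_ne[OF \<gamma>(1)]
    by (simp add: hd_conv_nth last_conv_nth)
  have "Kstarpow r m 1 x0 xn = (\<Sum>z\<in>Fset r x0. if z = xn then Kstar r m x0 z else 0)"
    by (simp add: if_distrib cong: if_cong)
  also have "\<dots> = Kstar r m x0 xn" using rx by (subst sum.delta[OF finF]) (simp add: Fset_def)
  finally show ?case using rx by (simp add: Kstar_def)
next
  case (Suc n)
  have x0B: "x0 \<notin> Bsink r" using oleq_notB[OF Suc.prems(1)] Suc.prems(2) by simp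
  have pos0: "M {x0} > 0" using M_pos[OF notB_V[OF x0B]] .
  have trm: "Kstar r m x0 z * Kstarpow r m n z xn = M {x0, z, xn} / M {x0}" if zF: "z \<in> Fset r x0" for z
  proof -
    have rz: "r x0 z" using zF by (simp add: Fset_def)
    have pz: "\<psi> z = \<psi> x0 + 1" using rz by (rule step)
    show ?thesis
    proof (cases "oleq r z xn")
      case True
      have psz: "\<psi> xn = \<psi> z + int n" using pz Suc.prems(2) by simp
      have IH: "Kstarpow r m n z xn = m [z, xn] / m [z]" using Suc.IH[OF True psz] .
      have zB: "z \<notin> Bsink r" using oleq_notB[OF True] psz Suc.hyps by simp
      have zA: "z \<notin> Asrc r" using rz by (auto simp: Asrc_def Eset_def)
      have posz: "M {z} > 0" using M_pos[OF notA_V[OF zA]] .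
      have mk: "M {x0, z} * M {z, xn} = M {z} * M {x0, z, xn}"
        by (rule markov[OF zA zB]) (use psz pz in simp_all)
      have "Kstar r m x0 z * Kstarpow r m n z xn = M {x0, z} / M {x0} * (M {z, xn} / M {z})"
        using rz IH psz pz by (simp add: Kstar_def m1 m2)
      also have "\<dots> = M {x0, z, xn} / M {x0}" using mk posz by (simp add: field_simps)
      finally show ?thesis .
    next
      case False
      have "Kstarpow r m n z xn = 0" using Kstarpow_nz[of n z xn] False path_oleq by blast
      moreover have "S {x0, z, xn} = {}" using S_nonoleq(2)[OF False] pz Suc.prems(2) by simp
      ultimately show ?thesis by (simp add: M_def)
    qed
  qed
  have "Kstarpow r m (Suc n) x0 xn = (\<Sum>z\<in>Fset r x0. M {x0, z, xn} / M {x0})"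
    using trm by simp
  also have "\<dots> = M {x0, xn} / M {x0}"
    using sumM3_succ[of x0 xn] Suc.prems(2) notB_V[OF x0B] by (simp add: sum_divide_distrib[symmetric])
  also have "\<dots> = m [x0, xn] / m [x0]" using Suc.prems(2) by (simp add: m1 m2)
  finally show ?case .
qed

end


lemma opath_walk: "opath r \<gamma> \<Longrightarrow> (\<forall>x y. r x y \<longrightarrow> adj x y) \<Longrightarrow> walk adj \<gamma>"
  by (auto simp: opath_def walk_def)

theorem proposition3p8:
  fixes adj :: "'a \<Rightarrow> 'a \<Rightarrow> bool"
    and f :: "real \<Rightarrow> 'a \<Rightarrow> real"
    and g :: "real \<Rightarrow> 'a \<Rightarrow> 'a \<Rightarrow> real"
    and h :: "real \<Rightarrow> 'a \<Rightarrow> 'a \<Rightarrow> 'a \<Rightarrow> real"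
  assumes "symp adj" and "irreflp adj"
    and "graph_connected adj" and "locally_finite adj"
    and "W1plus_geodesic adj f g h"
  defines "r \<equiv> orient adj (f 0) (f 1)"
    and "m \<equiv> mfun (orient adj (f 0) (f 1)) f g"
  shows "(\<forall>x1. x1 \<notin> Asrc r \<longrightarrow> (\<Sum>x0\<in>Eset r x1. Kker r m x1 x0) = 1)
    \<and> (\<forall>x0. x0 \<notin> Bsink r \<longrightarrow> (\<Sum>x1\<in>Fset r x0. Kstar r m x0 x1) = 1)
    \<and> (\<forall>u v. mscal m (Kop r m u) v = mscal m u (Kstarop r m v))
    \<and> (\<forall>n x0 xn. n \<ge> 1 \<longrightarrow>
          (Kpow r m n xn x0 > 0 \<longrightarrow> oleq r x0 xn \<and> gdist adj x0 xn = n)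
        \<and> (oleq r x0 xn \<and> gdist adj x0 xn = n \<longrightarrow> Kpow r m n xn x0 = m [x0, xn] / m [xn]))
    \<and> (\<forall>n x0 xn. n \<ge> 1 \<longrightarrow> oleq r x0 xn \<and> gdist adj x0 xn = n \<longrightarrow>
          Kstarpow r m n x0 xn = m [x0, xn] / m [x0])
    \<and> (\<exists>N. \<forall>u. (Kop r m ^^ N) u = (\<lambda>_. 0))
    \<and> (\<exists>N. \<forall>u. (Kstarop r m ^^ N) u = (\<lambda>_. 0))"
proof -
  have rdef: "r = orient adj (f 0) (f 1)" by (simp add: r_def)
  note st = W_structure[OF assms(3,4,5) rdef]
  obtain \<psi> :: "'a \<Rightarrow> int" where stp: "\<forall>x y. r x y \<longrightarrow> \<psi> y = \<psi> x + 1"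
    and lip: "\<forall>x y. \<psi> y - \<psi> x \<le> int (gdist adj x y)"
    using st(2) by blast
  interpret gr r \<psi> f g
    by unfold_locales (use st(1,4,5) stp in auto, use st(6) in blast)
  have mm: "m = mfun r f g" by (simp add: m_def r_def)
  have pathd: "gdist adj x y = length \<gamma> - 1 \<and> \<psi> y = \<psi> x + int (length \<gamma> - 1)"
    if "opath r \<gamma>" "hd \<gamma> = x" "last \<gamma> = y" for \<gamma> x y
  proof -
    have w: "walk adj \<gamma>" using opath_walk[OF that(1)] st(3) by blast
    have "gdist adj x y \<le> length \<gamma> - 1" using gdist_le[OF w that(2,3)] .
    moreover have e: "\<psi> y = \<psi> x + int (length \<gamma> - 1)" using opath_hd_last[OF that(1)] that by simp
    moreover have "\<psi> y - \<psi> x \<le> int (gdist adj x y)" using lip by blast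
    ultimately show ?thesis by linarith
  qed
  show ?thesis
    unfolding mm
  proof (intro conjI allI impI)
    fix x1 assume "x1 \<notin> Asrc r" then show "(\<Sum>x0\<in>Eset r x1. Kker r (mfun r f g) x1 x0) = 1" by (rule R1)
  next
    fix x0 assume "x0 \<notin> Bsink r" then show "(\<Sum>x1\<in>Fset r x0. Kstar r (mfun r f g) x0 x1) = 1" by (rule R2)
  next
    fix u v show "mscal (mfun r f g) (Kop r (mfun r f g) u) v = mscal (mfun r f g) u (Kstarop r (mfun r f g) v)"
      by (rule R3)
  next
    fix n x0 xn assume n: "1 \<le> n" and k: "0 < Kpow r (mfun r f g) n xn x0"
    then obtain \<gamma> where \<gamma>: "opath r \<gamma>" "hd \<gamma> = x0" "last \<gamma> = xn" "length \<gamma> = Suc n"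
      using Kpow_nz[of n xn x0] by auto
    show "oleq r x0 xn" using path_oleq[OF \<gamma>(1-3)] .
    show "gdist adj x0 xn = n" using pathd[OF \<gamma>(1-3)] \<gamma>(4) by simp
  next
    fix n x0 xn assume n: "1 \<le> n" and o: "oleq r x0 xn \<and> gdist adj x0 xn = n"
    obtain \<gamma> where \<gamma>: "opath r \<gamma>" "hd \<gamma> = x0" "last \<gamma> = xn"
      using o unfolding oleq_def by blast
    have "\<psi> xn = \<psi> x0 + int n" using pathd[OF \<gamma>] o by simp
    then show "Kpow r (mfun r f g) n xn x0 = mfun r f g [x0, xn] / mfun r f g [xn]"
      using R4b[OF n] o by blast
  next
    fix n x0 xn assume n: "1 \<le> n" and o: "oleq r x0 xn \<and> gdist adj x0 xn = n"
    obtain \<gamma> where \<gamma>: "opath r \<gamma>" "hd \<gamma> = x0" "last \<gamma> = xn"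
      using o unfolding oleq_def by blast
    have "\<psi> xn = \<psi> x0 + int n" using pathd[OF \<gamma>] o by simp
    then show "Kstarpow r (mfun r f g) n x0 xn = mfun r f g [x0, xn] / mfun r f g [x0]"
      using R5b[OF n] o by blast
  next
    show "\<exists>N. \<forall>u. (Kop r (mfun r f g) ^^ N) u = (\<lambda>_. 0)" by (rule R6)
  next
    show "\<exists>N. \<forall>u. (Kstarop r (mfun r f g) ^^ N) u = (\<lambda>_. 0)" by (rule R6')
  qed
qed


end
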